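(* Let ${\rm F}_5\subset\mathbb{P}^3(\mathbb{C})$ be the Fermat quintic $x^5-y^5-z^5+w^5=0$. The maximal number of pairwise disjoint lines contained in ${\rm F}_5$ is $13$. *)

theory Defs
  imports Complex_Main
begin

text \<open>Homogeneous coordinates of P^3(C): vectors (x,y,z,w) in C^4.
  A projective line is the projectivisation of a 2-dimensional complex
  linear subspace of C^4; we represent it by that subspace.\<close>

type_synonym cvec4 = "complex \<times> complex \<times> complex \<times> complex"

definition lincomb :: "complex \<Rightarrow> cvec4 \<Rightarrow> complex \<Rightarrow> cvec4 \<Rightarrow> cvec4" where
  "lincomb a p b q =
     (case p of (p1,p2,p3,p4) \<Rightarrow> case q of (q1,q2,q3,q4) \<Rightarrow>
       (a*p1 + b*q1, a*p2 + b*q2, a*p3 + b*q3, a*p4 + b*q4))"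

definition cindep2 :: "cvec4 \<Rightarrow> cvec4 \<Rightarrow> bool" where
  "cindep2 p q \<longleftrightarrow> (\<forall>a b. lincomb a p b q = (0,0,0,0) \<longrightarrow> a = 0 \<and> b = 0)"

definition cspan2 :: "cvec4 \<Rightarrow> cvec4 \<Rightarrow> cvec4 set" where
  "cspan2 p q = {lincomb a p b q | a b. True}"

definition proj_line :: "cvec4 set \<Rightarrow> bool" where
  "proj_line L \<longleftrightarrow> (\<exists>p q. cindep2 p q \<and> L = cspan2 p q)"

definition fermat5 :: "cvec4 \<Rightarrow> complex" where
  "fermat5 v = (case v of (x,y,z,w) \<Rightarrow> x^5 - y^5 - z^5 + w^5)"

definition line_on_F5 :: "cvec4 set \<Rightarrow> bool" where
  "line_on_F5 L \<longleftrightarrow> proj_line L \<and> (\<forall>v\<in>L. fermat5 v = 0)"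

text \<open>Two projective lines are disjoint iff the subspaces meet only in 0.\<close>
definition disjoint_lines :: "cvec4 set \<Rightarrow> cvec4 set \<Rightarrow> bool" where
  "disjoint_lines L M \<longleftrightarrow> L \<inter> M = {(0,0,0,0)}"

end

theory Submission
  imports Defs "HOL-Computational_Algebra.Polynomial"
begin

lemma coeffs6:
  fixes c0 c1 c2 c3 c4 c5 :: complex
  assumes "\<forall>s. c0 + c1*s + c2*s^2 + c3*s^3 + c4*s^4 + c5*s^5 = 0"
  shows "c0 = 0 \<and> c1 = 0 \<and> c2 = 0 \<and> c3 = 0 \<and> c4 = 0 \<and> c5 = 0"
proof -
  define P where "P = [:c0,c1,c2,c3,c4,c5:]"
  have "\<forall>s. poly P s = 0"
  proof
    fix s
    have "poly P s = c0 + c1*s + c2*s^2 + c3*s^3 + c4*s^4 + c5*s^5"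
      unfolding P_def by (simp add: algebra_simps eval_nat_numeral)
    then show "poly P s = 0" using assms by simp
  qed
  then have "P = 0" using poly_all_0_iff_0 by blast
  then have "\<forall>k. coeff P k = 0" by simp
  then show ?thesis unfolding P_def
    by (metis coeff_pCons_0 coeff_pCons_Suc)
qed

lemma expand5:
  fixes e1 e2 e3 e4 a b c d s :: complex
  shows "e1*s^5 + e2*1^5 + e3*(a*s+b*1)^5 + e4*(c*s+d*1)^5 =
    (e2 + e3*b^5 + e4*d^5) + (5*(e3*a*b^4 + e4*c*d^4))*s + (10*(e3*a^2*b^3+e4*c^2*d^3))*s^2
    + (10*(e3*a^3*b^2+e4*c^3*d^2))*s^3 + (5*(e3*a^4*b+e4*c^4*d))*s^4 + (e1 + e3*a^5+e4*c^5)*s^5"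
  by (simp add: eval_nat_numeral algebra_simps)


lemma core_alg:
  fixes e1 e2 e3 e4 a b c d :: complex
  assumes ne: "e1 \<noteq> 0" "e2 \<noteq> 0" "e3 \<noteq> 0" "e4 \<noteq> 0"
    and E0: "e2 + e3*b^5 + e4*d^5 = 0"
    and E4: "e3*a*b^4 + e4*c*d^4 = 0"
    and E3: "e3*a^2*b^3+e4*c^2*d^3 = 0"
    and E2: "e3*a^3*b^2+e4*c^3*d^2 = 0"
    and E1: "e3*a^4*b+e4*c^4*d = 0"
    and E5: "e1 + e3*a^5+e4*c^5 = 0"
  shows "(b = 0 \<and> c = 0) \<or> (a = 0 \<and> d = 0)"
proof (cases "a = 0")
  case True
  then have "c^4*d = 0" "c*d^4 = 0" using E1 E4 ne by auto
  moreover have "c \<noteq> 0" using E5 True ne by auto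
  ultimately show ?thesis using True by auto
next
  case a: False
  show ?thesis
  proof (cases "b = 0")
    case True
    then have "c^4*d = 0" "c*d^4 = 0" using E1 E4 ne by auto
    moreover have "d \<noteq> 0" using E0 True ne by auto
    ultimately show ?thesis using True by auto
  next
    case b: False
    have "e4*c^4*d = -(e3*a^4*b)" using E1 by (simp add: eq_neg_iff_add_eq_0 add.commute)
    then have "e4*c^4*d \<noteq> 0" using a b ne by simp
    then have c: "c \<noteq> 0" and d: "d \<noteq> 0" by auto
    have "e3*a^4*b * (e4*c^3*d^2) = e3*a^3*b^2 * (e4*c^4*d)"
    proof -
      have "e3*a^4*b = - (e4*c^4*d)" "e3*a^3*b^2 = - (e4*c^3*d^2)"
        using E1 E2 by (simp_all add: eq_neg_iff_add_eq_0)
      then show ?thesis by (simp add: algebra_simps)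
    qed
    then have "(a^3*b*c^3*d*e3*e4) * (a*d) = (a^3*b*c^3*d*e3*e4) * (b*c)"
      by (simp add: algebra_simps eval_nat_numeral)
    then have ad: "a*d = b*c" using a b c d ne by simp
    define r where "r = d / b"
    have dr: "d = r*b" using b r_def by simp
    have "b*c = b*(r*a)" by (subst ad[symmetric], subst dr, simp only: ac_simps)
    then have cr: "c = r*a" using b mult_left_cancel by blast
    have "a^4*b*(e3 + e4*r^5) = 0" using E1 unfolding dr cr by (simp add: algebra_simps eval_nat_numeral)
    then have "e3 + e4*r^5 = 0" using a b by simp
    moreover have "e1 + a^5*(e3 + e4*r^5) = 0" using E5 unfolding cr by (simp add: algebra_simps eval_nat_numeral)
    ultimately show ?thesis using ne by simp
  qed
qed


lemma core_line:
  fixes p1 p2 p3 p4 q1 q2 q3 q4 e1 e2 e3 e4 :: complex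
  assumes ne: "e1 \<noteq> 0" "e2 \<noteq> 0" "e3 \<noteq> 0" "e4 \<noteq> 0"
    and D: "p1*q2 - p2*q1 \<noteq> 0"
    and F: "\<forall>a b. e1*(a*p1+b*q1)^5 + e2*(a*p2+b*q2)^5 + e3*(a*p3+b*q3)^5 + e4*(a*p4+b*q4)^5 = 0"
  shows "(\<exists>\<alpha> \<delta>. e1 + e3*\<alpha>^5 = 0 \<and> e2 + e4*\<delta>^5 = 0 \<and>
           (\<forall>v1 v2 v3 v4. (\<exists>a b. v1 = a*p1+b*q1 \<and> v2 = a*p2+b*q2 \<and> v3 = a*p3+b*q3 \<and> v4 = a*p4+b*q4)
              \<longleftrightarrow> (v3 = \<alpha>*v1 \<and> v4 = \<delta>*v2)))
       \<or> (\<exists>\<gamma> \<beta>. e1 + e4*\<gamma>^5 = 0 \<and> e2 + e3*\<beta>^5 = 0 \<and>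
           (\<forall>v1 v2 v3 v4. (\<exists>a b. v1 = a*p1+b*q1 \<and> v2 = a*p2+b*q2 \<and> v3 = a*p3+b*q3 \<and> v4 = a*p4+b*q4)
              \<longleftrightarrow> (v4 = \<gamma>*v1 \<and> v3 = \<beta>*v2)))"
proof -
  define \<Delta> where "\<Delta> = p1*q2 - p2*q1"
  have \<Delta>: "\<Delta> \<noteq> 0" using D \<Delta>_def by simp
  define A where "A = (p3*q2 - p2*q3)/\<Delta>"
  define B where "B = (p1*q3 - p3*q1)/\<Delta>"
  define C where "C = (p4*q2 - p2*q4)/\<Delta>"
  define Dd where "Dd = (p1*q4 - p4*q1)/\<Delta>"
  have h3: "p3 = A*p1 + B*p2" "q3 = A*q1 + B*q2"
    using \<Delta> unfolding A_def B_def by (simp_all add: field_simps, (simp_all add: \<Delta>_def algebra_simps)?)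
  have h4: "p4 = C*p1 + Dd*p2" "q4 = C*q1 + Dd*q2"
    using \<Delta> unfolding C_def Dd_def by (simp_all add: field_simps, (simp_all add: \<Delta>_def algebra_simps)?)
  have solve: "\<exists>a b. a*p1+b*q1 = s \<and> a*p2+b*q2 = t" for s t
  proof (intro exI conjI)
    show "(s*q2 - t*q1)/\<Delta>*p1 + (t*p1 - s*p2)/\<Delta>*q1 = s"
      using \<Delta> by (simp add: field_simps, (simp add: \<Delta>_def algebra_simps)?)
    show "(s*q2 - t*q1)/\<Delta>*p2 + (t*p1 - s*p2)/\<Delta>*q2 = t"
      using \<Delta> by (simp add: field_simps, (simp add: \<Delta>_def algebra_simps)?)
  qed
  have lin3: "a*p3+b*q3 = A*(a*p1+b*q1) + B*(a*p2+b*q2)" for a b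
    unfolding h3 by (simp add: algebra_simps)
  have lin4: "a*p4+b*q4 = C*(a*p1+b*q1) + Dd*(a*p2+b*q2)" for a b
    unfolding h4 by (simp add: algebra_simps)
  have G: "e1*s^5 + e2*1^5 + e3*(A*s+B*1)^5 + e4*(C*s+Dd*1)^5 = 0" for s
  proof -
    obtain a b where ab: "a*p1+b*q1 = s" "a*p2+b*q2 = 1" using solve by blast
    show ?thesis using F[rule_format, of a b] unfolding lin3 lin4 ab .
  qed
  have "\<forall>s. (e2 + e3*B^5 + e4*Dd^5) + (5*(e3*A*B^4 + e4*C*Dd^4))*s + (10*(e3*A^2*B^3+e4*C^2*Dd^3))*s^2
    + (10*(e3*A^3*B^2+e4*C^3*Dd^2))*s^3 + (5*(e3*A^4*B+e4*C^4*Dd))*s^4 + (e1 + e3*A^5+e4*C^5)*s^5 = 0"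
    using G unfolding expand5 by blast
  from coeffs6[OF this] have c: "e2 + e3*B^5 + e4*Dd^5 = 0"
    "5*(e3*A*B^4 + e4*C*Dd^4) = 0" "10*(e3*A^2*B^3+e4*C^2*Dd^3) = 0"
    "10*(e3*A^3*B^2+e4*C^3*Dd^2) = 0" "5*(e3*A^4*B+e4*C^4*Dd) = 0"
    "e1 + e3*A^5+e4*C^5 = 0" by blast+
  have E0: "e2 + e3*B^5 + e4*Dd^5 = 0" by (rule c(1))
  have E4: "e3*A*B^4 + e4*C*Dd^4 = 0" by (metis c(2) mult_eq_0_iff zero_neq_numeral)
  have E3: "e3*A^2*B^3+e4*C^2*Dd^3 = 0" by (metis c(3) mult_eq_0_iff zero_neq_numeral)
  have E2: "e3*A^3*B^2+e4*C^3*Dd^2 = 0" by (metis c(4) mult_eq_0_iff zero_neq_numeral)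
  have E1: "e3*A^4*B+e4*C^4*Dd = 0" by (metis c(5) mult_eq_0_iff zero_neq_numeral)
  have E5: "e1 + e3*A^5+e4*C^5 = 0" by (rule c(6))
  from core_alg[OF ne E0 E4 E3 E2 E1 E5]
  show ?thesis
  proof
    assume BC: "B = 0 \<and> C = 0"
    show ?thesis
    proof (rule disjI1, intro exI conjI allI)
      show "e1 + e3*A^5 = 0" using E5 BC by simp
      show "e2 + e4*Dd^5 = 0" using E0 BC by simp
      fix v1 v2 v3 v4
      show "(\<exists>a b. v1 = a*p1+b*q1 \<and> v2 = a*p2+b*q2 \<and> v3 = a*p3+b*q3 \<and> v4 = a*p4+b*q4)
              \<longleftrightarrow> (v3 = A*v1 \<and> v4 = Dd*v2)"
      proof
        assume "\<exists>a b. v1 = a*p1+b*q1 \<and> v2 = a*p2+b*q2 \<and> v3 = a*p3+b*q3 \<and> v4 = a*p4+b*q4"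
        then show "v3 = A*v1 \<and> v4 = Dd*v2" using lin3 lin4 BC by auto
      next
        assume v: "v3 = A*v1 \<and> v4 = Dd*v2"
        obtain a b where ab: "a*p1+b*q1 = v1" "a*p2+b*q2 = v2" using solve by blast
        have "v1 = a*p1+b*q1 \<and> v2 = a*p2+b*q2 \<and> v3 = a*p3+b*q3 \<and> v4 = a*p4+b*q4"
          using ab v lin3[of a b] lin4[of a b] BC by auto
        then show "\<exists>a b. v1 = a*p1+b*q1 \<and> v2 = a*p2+b*q2 \<and> v3 = a*p3+b*q3 \<and> v4 = a*p4+b*q4"
          by blast
      qed
    qed
  next
    assume AD: "A = 0 \<and> Dd = 0"
    show ?thesis
    proof (rule disjI2, intro exI conjI allI)
      show "e1 + e4*C^5 = 0" using E5 AD by simp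
      show "e2 + e3*B^5 = 0" using E0 AD by simp
      fix v1 v2 v3 v4
      show "(\<exists>a b. v1 = a*p1+b*q1 \<and> v2 = a*p2+b*q2 \<and> v3 = a*p3+b*q3 \<and> v4 = a*p4+b*q4)
              \<longleftrightarrow> (v4 = C*v1 \<and> v3 = B*v2)"
      proof
        assume "\<exists>a b. v1 = a*p1+b*q1 \<and> v2 = a*p2+b*q2 \<and> v3 = a*p3+b*q3 \<and> v4 = a*p4+b*q4"
        then show "v4 = C*v1 \<and> v3 = B*v2" using lin3 lin4 AD by auto
      next
        assume v: "v4 = C*v1 \<and> v3 = B*v2"
        obtain a b where ab: "a*p1+b*q1 = v1" "a*p2+b*q2 = v2" using solve by blast
        have "v1 = a*p1+b*q1 \<and> v2 = a*p2+b*q2 \<and> v3 = a*p3+b*q3 \<and> v4 = a*p4+b*q4"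
          using ab v lin3[of a b] lin4[of a b] AD by auto
        then show "\<exists>a b. v1 = a*p1+b*q1 \<and> v2 = a*p2+b*q2 \<and> v3 = a*p3+b*q3 \<and> v4 = a*p4+b*q4"
          by blast
      qed
    qed
  qed
qed

definition LA :: "complex \<Rightarrow> complex \<Rightarrow> cvec4 set" where
  "LA a b = {(x,y,z,w). x = a*y \<and> z = b*w}"
definition LB :: "complex \<Rightarrow> complex \<Rightarrow> cvec4 set" where
  "LB a b = {(x,y,z,w). x = a*z \<and> y = b*w}"
definition LC :: "complex \<Rightarrow> complex \<Rightarrow> cvec4 set" where
  "LC a b = {(x,y,z,w). x = a*w \<and> y = b*z}"

definition std_line :: "cvec4 set \<Rightarrow> bool" where
  "std_line L \<longleftrightarrow> (\<exists>a b. a^5 = 1 \<and> b^5 = 1 \<and> L = LA a b) \<or> (\<exists>a b. a^5 = 1 \<and> b^5 = 1 \<and> L = LB a b)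
     \<or> (\<exists>a b. a^5 = -1 \<and> b^5 = -1 \<and> L = LC a b)"

lemma inv5: "(a::complex)^5 = c \<Longrightarrow> c \<noteq> 0 \<Longrightarrow> (1/a)^5 = 1/c \<and> a \<noteq> 0"
  by (auto simp: power_one_over)

lemma pw_p_m: "(1::complex) + -1*a = 0 \<Longrightarrow> a = 1" by (simp add: add_eq_0_iff)
lemma pw_p_p: "(1::complex) + 1*a = 0 \<Longrightarrow> a = -1" by (simp add: add_eq_0_iff)
lemma pw_m_p: "(-1::complex) + 1*a = 0 \<Longrightarrow> a = 1" by (simp add: add_eq_0_iff)
lemma pw_m_m: "(-1::complex) + -1*a = 0 \<Longrightarrow> a = -1" by (simp add: add_eq_0_iff)

lemma setI4: "(\<And>x y z w. (x,y,z,w) \<in> L \<longleftrightarrow> P x y z w) \<Longrightarrow> L = {(x,y,z,w). P x y z w}"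
  by auto

lemma classify:
  assumes "line_on_F5 L"
  shows "std_line L"
proof -
  obtain p q where ind: "cindep2 p q" and Lpq: "L = cspan2 p q" and
    F0: "\<forall>v\<in>L. fermat5 v = 0" using assms unfolding line_on_F5_def proj_line_def by blast
  obtain p1 p2 p3 p4 where p: "p = (p1,p2,p3,p4)" by (cases p) auto
  obtain q1 q2 q3 q4 where q: "q = (q1,q2,q3,q4)" by (cases q) auto
  have mem: "(x,y,z,w) \<in> L \<longleftrightarrow> (\<exists>a b. x = a*p1+b*q1 \<and> y = a*p2+b*q2 \<and> z = a*p3+b*q3 \<and> w = a*p4+b*q4)"
    for x y z w unfolding Lpq cspan2_def lincomb_def p q by auto
  have F: "(a*p1+b*q1)^5 - (a*p2+b*q2)^5 - (a*p3+b*q3)^5 + (a*p4+b*q4)^5 = 0" for a b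
  proof -
    have "(a*p1+b*q1, a*p2+b*q2, a*p3+b*q3, a*p4+b*q4) \<in> L" using mem by blast
    then have "fermat5 (a*p1+b*q1, a*p2+b*q2, a*p3+b*q3, a*p4+b*q4) = 0" using F0 by blast
    then show ?thesis unfolding fermat5_def by (simp only: prod.case)
  qed
  have indep: "a*p1+b*q1 = 0 \<Longrightarrow> a*p2+b*q2 = 0 \<Longrightarrow> a*p3+b*q3 = 0 \<Longrightarrow> a*p4+b*q4 = 0 \<Longrightarrow> a = 0 \<and> b = 0" for a b
  proof -
    assume h: "a*p1+b*q1 = 0" "a*p2+b*q2 = 0" "a*p3+b*q3 = 0" "a*p4+b*q4 = 0"
    have "lincomb a p b q = (a*p1+b*q1, a*p2+b*q2, a*p3+b*q3, a*p4+b*q4)" by (simp add: lincomb_def p q)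
    then have "lincomb a p b q = (0,0,0,0)" using h by simp
    then show ?thesis using ind unfolding cindep2_def by blast
  qed
  have minors: "p1*q2 - p2*q1 \<noteq> 0 \<or> p1*q3 - p3*q1 \<noteq> 0 \<or> p1*q4 - p4*q1 \<noteq> 0 \<or>
      p2*q3 - p3*q2 \<noteq> 0 \<or> p2*q4 - p4*q2 \<noteq> 0 \<or> p3*q4 - p4*q3 \<noteq> 0"
  proof (rule ccontr)
    assume "\<not> ?thesis"
    then have m: "p1*q2 - p2*q1 = 0" "p1*q3 - p3*q1 = 0" "p1*q4 - p4*q1 = 0" "p2*q3 - p3*q2 = 0" "p2*q4 - p4*q2 = 0" "p3*q4 - p4*q3 = 0"
      by auto
    show False
    proof (cases "p1 = 0 \<and> p2 = 0 \<and> p3 = 0 \<and> p4 = 0")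
      case True
      then show False using indep[of 1 0] by auto
    next
      case False
      then consider "p1 \<noteq> 0" | "p2 \<noteq> 0" | "p3 \<noteq> 0" | "p4 \<noteq> 0" by blast
      then show False
      proof cases
        case 1
        have "q1*p1 + (-p1)*q1 = 0" by simp
        moreover         have "q1*p2 + (-p1)*q2 = -(p1*q2 - p2*q1)" by (simp add: algebra_simps)
        then have "q1*p2 + (-p1)*q2 = 0" using m by simp
        moreover         have "q1*p3 + (-p1)*q3 = -(p1*q3 - p3*q1)" by (simp add: algebra_simps)
        then have "q1*p3 + (-p1)*q3 = 0" using m by simp
        moreover         have "q1*p4 + (-p1)*q4 = -(p1*q4 - p4*q1)" by (simp add: algebra_simps)
        then have "q1*p4 + (-p1)*q4 = 0" using m by simp
        ultimately have "q1 = 0 \<and> -p1 = 0" by (rule indep)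
        then show False using 1 by simp
      next
        case 2
        have "q2*p1 + (-p2)*q1 = p1*q2 - p2*q1" by (simp add: algebra_simps)
        then have "q2*p1 + (-p2)*q1 = 0" using m by simp
        moreover         have "q2*p2 + (-p2)*q2 = 0" by simp
        moreover         have "q2*p3 + (-p2)*q3 = -(p2*q3 - p3*q2)" by (simp add: algebra_simps)
        then have "q2*p3 + (-p2)*q3 = 0" using m by simp
        moreover         have "q2*p4 + (-p2)*q4 = -(p2*q4 - p4*q2)" by (simp add: algebra_simps)
        then have "q2*p4 + (-p2)*q4 = 0" using m by simp
        ultimately have "q2 = 0 \<and> -p2 = 0" by (rule indep)
        then show False using 2 by simp
      next
        case 3
        have "q3*p1 + (-p3)*q1 = p1*q3 - p3*q1" by (simp add: algebra_simps)
        then have "q3*p1 + (-p3)*q1 = 0" using m by simp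
        moreover         have "q3*p2 + (-p3)*q2 = p2*q3 - p3*q2" by (simp add: algebra_simps)
        then have "q3*p2 + (-p3)*q2 = 0" using m by simp
        moreover         have "q3*p3 + (-p3)*q3 = 0" by simp
        moreover         have "q3*p4 + (-p3)*q4 = -(p3*q4 - p4*q3)" by (simp add: algebra_simps)
        then have "q3*p4 + (-p3)*q4 = 0" using m by simp
        ultimately have "q3 = 0 \<and> -p3 = 0" by (rule indep)
        then show False using 3 by simp
      next
        case 4
        have "q4*p1 + (-p4)*q1 = p1*q4 - p4*q1" by (simp add: algebra_simps)
        then have "q4*p1 + (-p4)*q1 = 0" using m by simp
        moreover         have "q4*p2 + (-p4)*q2 = p2*q4 - p4*q2" by (simp add: algebra_simps)
        then have "q4*p2 + (-p4)*q2 = 0" using m by simp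
        moreover         have "q4*p3 + (-p4)*q3 = p3*q4 - p4*q3" by (simp add: algebra_simps)
        then have "q4*p3 + (-p4)*q3 = 0" using m by simp
        moreover         have "q4*p4 + (-p4)*q4 = 0" by simp
        ultimately have "q4 = 0 \<and> -p4 = 0" by (rule indep)
        then show False using 4 by simp
      qed
    qed
  qed
  have ne: "(1::complex) \<noteq> 0" "(-1::complex) \<noteq> 0" by simp_all
  have case0: "p1*q2 - p2*q1 \<noteq> 0 \<Longrightarrow> std_line L"
  proof -
    assume D: "p1*q2 - p2*q1 \<noteq> 0"
    have FF: "\<forall>a b. (1)*(a*p1+b*q1)^5 + (-1)*(a*p2+b*q2)^5 + (-1)*(a*p3+b*q3)^5 + (1)*(a*p4+b*q4)^5 = 0"
    proof (intro allI)
      fix a b show "(1)*(a*p1+b*q1)^5 + (-1)*(a*p2+b*q2)^5 + (-1)*(a*p3+b*q3)^5 + (1)*(a*p4+b*q4)^5 = 0" using F[of a b] by (simp add: algebra_simps)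
    qed
    from core_line[where ?e1.0="1" and ?e2.0="-1" and ?e3.0="-1" and ?e4.0="1" and ?p1.0="p1" and ?p2.0="p2" and ?p3.0="p3" and ?p4.0="p4" and ?q1.0="q1" and ?q2.0="q2" and ?q3.0="q3" and ?q4.0="q4", OF ne(1) ne(2) ne(2) ne(1) D FF]
    show "std_line L"
    proof (elim disjE exE conjE)
      fix \<alpha> \<delta> :: complex
      assume c1: "1 + -1*\<alpha>^5 = 0" and c2: "-1 + 1*\<delta>^5 = 0"
      assume iff: "\<forall>v1 v2 v3 v4. (\<exists>a b. v1 = a*p1+b*q1 \<and> v2 = a*p2+b*q2 \<and> v3 = a*p3+b*q3 \<and> v4 = a*p4+b*q4) \<longleftrightarrow> (v3 = \<alpha>*v1 \<and> v4 = \<delta>*v2)"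
      have r: "(x,y,z,w) \<in> L \<longleftrightarrow> (z = \<alpha>*x \<and> w = \<delta>*y)" for x y z w
        using mem[of x y z w] iff[rule_format, of x y z w] by blast
      have k1: "\<alpha>^5 = 1" by (rule pw_p_m[OF c1])
      have k2: "\<delta>^5 = 1" by (rule pw_m_p[OF c2])
      have n1: "\<alpha> \<noteq> 0" using k1 by auto
      have n2: "\<delta> \<noteq> 0" using k2 by auto
      have "L = LB (1/\<alpha>) (1/\<delta>)"
        unfolding LB_def using r n1 n2 by (intro setI4) (auto simp: field_simps)
      moreover have "(1/\<alpha>)^5 = 1" "(1/\<delta>)^5 = 1" using k1 k2 by (simp_all add: power_one_over)
      ultimately show "std_line L" unfolding std_line_def by blast
    next
      fix \<alpha> \<delta> :: complex
      assume c1: "1 + 1*\<alpha>^5 = 0" and c2: "-1 + -1*\<delta>^5 = 0"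
      assume iff: "\<forall>v1 v2 v3 v4. (\<exists>a b. v1 = a*p1+b*q1 \<and> v2 = a*p2+b*q2 \<and> v3 = a*p3+b*q3 \<and> v4 = a*p4+b*q4) \<longleftrightarrow> (v4 = \<alpha>*v1 \<and> v3 = \<delta>*v2)"
      have r: "(x,y,z,w) \<in> L \<longleftrightarrow> (w = \<alpha>*x \<and> z = \<delta>*y)" for x y z w
        using mem[of x y z w] iff[rule_format, of x y z w] by blast
      have k1: "\<alpha>^5 = -1" by (rule pw_p_p[OF c1])
      have k2: "\<delta>^5 = -1" by (rule pw_m_m[OF c2])
      have n1: "\<alpha> \<noteq> 0" using k1 by auto
      have n2: "\<delta> \<noteq> 0" using k2 by auto
      have "L = LC (1/\<alpha>) (1/\<delta>)"
        unfolding LC_def using r n1 n2 by (intro setI4) (auto simp: field_simps)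
      moreover have "(1/\<alpha>)^5 = -1" "(1/\<delta>)^5 = -1" using k1 k2 by (simp_all add: power_one_over)
      ultimately show "std_line L" unfolding std_line_def by blast
    qed
  qed
  have case1: "p1*q3 - p3*q1 \<noteq> 0 \<Longrightarrow> std_line L"
  proof -
    assume D: "p1*q3 - p3*q1 \<noteq> 0"
    have FF: "\<forall>a b. (1)*(a*p1+b*q1)^5 + (-1)*(a*p3+b*q3)^5 + (-1)*(a*p2+b*q2)^5 + (1)*(a*p4+b*q4)^5 = 0"
    proof (intro allI)
      fix a b show "(1)*(a*p1+b*q1)^5 + (-1)*(a*p3+b*q3)^5 + (-1)*(a*p2+b*q2)^5 + (1)*(a*p4+b*q4)^5 = 0" using F[of a b] by (simp add: algebra_simps)
    qed
    from core_line[where ?e1.0="1" and ?e2.0="-1" and ?e3.0="-1" and ?e4.0="1" and ?p1.0="p1" and ?p2.0="p3" and ?p3.0="p2" and ?p4.0="p4" and ?q1.0="q1" and ?q2.0="q3" and ?q3.0="q2" and ?q4.0="q4", OF ne(1) ne(2) ne(2) ne(1) D FF]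
    show "std_line L"
    proof (elim disjE exE conjE)
      fix \<alpha> \<delta> :: complex
      assume c1: "1 + -1*\<alpha>^5 = 0" and c2: "-1 + 1*\<delta>^5 = 0"
      assume iff: "\<forall>v1 v2 v3 v4. (\<exists>a b. v1 = a*p1+b*q1 \<and> v2 = a*p3+b*q3 \<and> v3 = a*p2+b*q2 \<and> v4 = a*p4+b*q4) \<longleftrightarrow> (v3 = \<alpha>*v1 \<and> v4 = \<delta>*v2)"
      have r: "(x,y,z,w) \<in> L \<longleftrightarrow> (y = \<alpha>*x \<and> w = \<delta>*z)" for x y z w
        using mem[of x y z w] iff[rule_format, of x z y w] by blast
      have k1: "\<alpha>^5 = 1" by (rule pw_p_m[OF c1])
      have k2: "\<delta>^5 = 1" by (rule pw_m_p[OF c2])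
      have n1: "\<alpha> \<noteq> 0" using k1 by auto
      have n2: "\<delta> \<noteq> 0" using k2 by auto
      have "L = LA (1/\<alpha>) (1/\<delta>)"
        unfolding LA_def using r n1 n2 by (intro setI4) (auto simp: field_simps)
      moreover have "(1/\<alpha>)^5 = 1" "(1/\<delta>)^5 = 1" using k1 k2 by (simp_all add: power_one_over)
      ultimately show "std_line L" unfolding std_line_def by blast
    next
      fix \<alpha> \<delta> :: complex
      assume c1: "1 + 1*\<alpha>^5 = 0" and c2: "-1 + -1*\<delta>^5 = 0"
      assume iff: "\<forall>v1 v2 v3 v4. (\<exists>a b. v1 = a*p1+b*q1 \<and> v2 = a*p3+b*q3 \<and> v3 = a*p2+b*q2 \<and> v4 = a*p4+b*q4) \<longleftrightarrow> (v4 = \<alpha>*v1 \<and> v3 = \<delta>*v2)"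
      have r: "(x,y,z,w) \<in> L \<longleftrightarrow> (w = \<alpha>*x \<and> y = \<delta>*z)" for x y z w
        using mem[of x y z w] iff[rule_format, of x z y w] by blast
      have k1: "\<alpha>^5 = -1" by (rule pw_p_p[OF c1])
      have k2: "\<delta>^5 = -1" by (rule pw_m_m[OF c2])
      have n1: "\<alpha> \<noteq> 0" using k1 by auto
      have n2: "\<delta> \<noteq> 0" using k2 by auto
      have "L = LC (1/\<alpha>) \<delta>"
        unfolding LC_def using r n1 n2 by (intro setI4) (auto simp: field_simps)
      moreover have "(1/\<alpha>)^5 = -1" "\<delta>^5 = -1" using k1 k2 by (simp_all add: power_one_over)
      ultimately show "std_line L" unfolding std_line_def by blast
    qed
  qed
  have case2: "p1*q4 - p4*q1 \<noteq> 0 \<Longrightarrow> std_line L"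
  proof -
    assume D: "p1*q4 - p4*q1 \<noteq> 0"
    have FF: "\<forall>a b. (1)*(a*p1+b*q1)^5 + (1)*(a*p4+b*q4)^5 + (-1)*(a*p2+b*q2)^5 + (-1)*(a*p3+b*q3)^5 = 0"
    proof (intro allI)
      fix a b show "(1)*(a*p1+b*q1)^5 + (1)*(a*p4+b*q4)^5 + (-1)*(a*p2+b*q2)^5 + (-1)*(a*p3+b*q3)^5 = 0" using F[of a b] by (simp add: algebra_simps)
    qed
    from core_line[where ?e1.0="1" and ?e2.0="1" and ?e3.0="-1" and ?e4.0="-1" and ?p1.0="p1" and ?p2.0="p4" and ?p3.0="p2" and ?p4.0="p3" and ?q1.0="q1" and ?q2.0="q4" and ?q3.0="q2" and ?q4.0="q3", OF ne(1) ne(1) ne(2) ne(2) D FF]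
    show "std_line L"
    proof (elim disjE exE conjE)
      fix \<alpha> \<delta> :: complex
      assume c1: "1 + -1*\<alpha>^5 = 0" and c2: "1 + -1*\<delta>^5 = 0"
      assume iff: "\<forall>v1 v2 v3 v4. (\<exists>a b. v1 = a*p1+b*q1 \<and> v2 = a*p4+b*q4 \<and> v3 = a*p2+b*q2 \<and> v4 = a*p3+b*q3) \<longleftrightarrow> (v3 = \<alpha>*v1 \<and> v4 = \<delta>*v2)"
      have r: "(x,y,z,w) \<in> L \<longleftrightarrow> (y = \<alpha>*x \<and> z = \<delta>*w)" for x y z w
        using mem[of x y z w] iff[rule_format, of x w y z] by blast
      have k1: "\<alpha>^5 = 1" by (rule pw_p_m[OF c1])
      have k2: "\<delta>^5 = 1" by (rule pw_p_m[OF c2])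
      have n1: "\<alpha> \<noteq> 0" using k1 by auto
      have n2: "\<delta> \<noteq> 0" using k2 by auto
      have "L = LA (1/\<alpha>) \<delta>"
        unfolding LA_def using r n1 n2 by (intro setI4) (auto simp: field_simps)
      moreover have "(1/\<alpha>)^5 = 1" "\<delta>^5 = 1" using k1 k2 by (simp_all add: power_one_over)
      ultimately show "std_line L" unfolding std_line_def by blast
    next
      fix \<alpha> \<delta> :: complex
      assume c1: "1 + -1*\<alpha>^5 = 0" and c2: "1 + -1*\<delta>^5 = 0"
      assume iff: "\<forall>v1 v2 v3 v4. (\<exists>a b. v1 = a*p1+b*q1 \<and> v2 = a*p4+b*q4 \<and> v3 = a*p2+b*q2 \<and> v4 = a*p3+b*q3) \<longleftrightarrow> (v4 = \<alpha>*v1 \<and> v3 = \<delta>*v2)"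
      have r: "(x,y,z,w) \<in> L \<longleftrightarrow> (z = \<alpha>*x \<and> y = \<delta>*w)" for x y z w
        using mem[of x y z w] iff[rule_format, of x w y z] by blast
      have k1: "\<alpha>^5 = 1" by (rule pw_p_m[OF c1])
      have k2: "\<delta>^5 = 1" by (rule pw_p_m[OF c2])
      have n1: "\<alpha> \<noteq> 0" using k1 by auto
      have n2: "\<delta> \<noteq> 0" using k2 by auto
      have "L = LB (1/\<alpha>) \<delta>"
        unfolding LB_def using r n1 n2 by (intro setI4) (auto simp: field_simps)
      moreover have "(1/\<alpha>)^5 = 1" "\<delta>^5 = 1" using k1 k2 by (simp_all add: power_one_over)
      ultimately show "std_line L" unfolding std_line_def by blast
    qed
  qed
  have case3: "p2*q3 - p3*q2 \<noteq> 0 \<Longrightarrow> std_line L"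
  proof -
    assume D: "p2*q3 - p3*q2 \<noteq> 0"
    have FF: "\<forall>a b. (-1)*(a*p2+b*q2)^5 + (-1)*(a*p3+b*q3)^5 + (1)*(a*p1+b*q1)^5 + (1)*(a*p4+b*q4)^5 = 0"
    proof (intro allI)
      fix a b show "(-1)*(a*p2+b*q2)^5 + (-1)*(a*p3+b*q3)^5 + (1)*(a*p1+b*q1)^5 + (1)*(a*p4+b*q4)^5 = 0" using F[of a b] by (simp add: algebra_simps)
    qed
    from core_line[where ?e1.0="-1" and ?e2.0="-1" and ?e3.0="1" and ?e4.0="1" and ?p1.0="p2" and ?p2.0="p3" and ?p3.0="p1" and ?p4.0="p4" and ?q1.0="q2" and ?q2.0="q3" and ?q3.0="q1" and ?q4.0="q4", OF ne(2) ne(2) ne(1) ne(1) D FF]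
    show "std_line L"
    proof (elim disjE exE conjE)
      fix \<alpha> \<delta> :: complex
      assume c1: "-1 + 1*\<alpha>^5 = 0" and c2: "-1 + 1*\<delta>^5 = 0"
      assume iff: "\<forall>v1 v2 v3 v4. (\<exists>a b. v1 = a*p2+b*q2 \<and> v2 = a*p3+b*q3 \<and> v3 = a*p1+b*q1 \<and> v4 = a*p4+b*q4) \<longleftrightarrow> (v3 = \<alpha>*v1 \<and> v4 = \<delta>*v2)"
      have r: "(x,y,z,w) \<in> L \<longleftrightarrow> (x = \<alpha>*y \<and> w = \<delta>*z)" for x y z w
        using mem[of x y z w] iff[rule_format, of y z x w] by blast
      have k1: "\<alpha>^5 = 1" by (rule pw_m_p[OF c1])
      have k2: "\<delta>^5 = 1" by (rule pw_m_p[OF c2])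
      have n1: "\<alpha> \<noteq> 0" using k1 by auto
      have n2: "\<delta> \<noteq> 0" using k2 by auto
      have "L = LA \<alpha> (1/\<delta>)"
        unfolding LA_def using r n1 n2 by (intro setI4) (auto simp: field_simps)
      moreover have "\<alpha>^5 = 1" "(1/\<delta>)^5 = 1" using k1 k2 by (simp_all add: power_one_over)
      ultimately show "std_line L" unfolding std_line_def by blast
    next
      fix \<alpha> \<delta> :: complex
      assume c1: "-1 + 1*\<alpha>^5 = 0" and c2: "-1 + 1*\<delta>^5 = 0"
      assume iff: "\<forall>v1 v2 v3 v4. (\<exists>a b. v1 = a*p2+b*q2 \<and> v2 = a*p3+b*q3 \<and> v3 = a*p1+b*q1 \<and> v4 = a*p4+b*q4) \<longleftrightarrow> (v4 = \<alpha>*v1 \<and> v3 = \<delta>*v2)"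
      have r: "(x,y,z,w) \<in> L \<longleftrightarrow> (w = \<alpha>*y \<and> x = \<delta>*z)" for x y z w
        using mem[of x y z w] iff[rule_format, of y z x w] by blast
      have k1: "\<alpha>^5 = 1" by (rule pw_m_p[OF c1])
      have k2: "\<delta>^5 = 1" by (rule pw_m_p[OF c2])
      have n1: "\<alpha> \<noteq> 0" using k1 by auto
      have n2: "\<delta> \<noteq> 0" using k2 by auto
      have "L = LB \<delta> (1/\<alpha>)"
        unfolding LB_def using r n1 n2 by (intro setI4) (auto simp: field_simps)
      moreover have "\<delta>^5 = 1" "(1/\<alpha>)^5 = 1" using k1 k2 by (simp_all add: power_one_over)
      ultimately show "std_line L" unfolding std_line_def by blast
    qed
  qed
  have case4: "p2*q4 - p4*q2 \<noteq> 0 \<Longrightarrow> std_line L"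
  proof -
    assume D: "p2*q4 - p4*q2 \<noteq> 0"
    have FF: "\<forall>a b. (-1)*(a*p2+b*q2)^5 + (1)*(a*p4+b*q4)^5 + (1)*(a*p1+b*q1)^5 + (-1)*(a*p3+b*q3)^5 = 0"
    proof (intro allI)
      fix a b show "(-1)*(a*p2+b*q2)^5 + (1)*(a*p4+b*q4)^5 + (1)*(a*p1+b*q1)^5 + (-1)*(a*p3+b*q3)^5 = 0" using F[of a b] by (simp add: algebra_simps)
    qed
    from core_line[where ?e1.0="-1" and ?e2.0="1" and ?e3.0="1" and ?e4.0="-1" and ?p1.0="p2" and ?p2.0="p4" and ?p3.0="p1" and ?p4.0="p3" and ?q1.0="q2" and ?q2.0="q4" and ?q3.0="q1" and ?q4.0="q3", OF ne(2) ne(1) ne(1) ne(2) D FF]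
    show "std_line L"
    proof (elim disjE exE conjE)
      fix \<alpha> \<delta> :: complex
      assume c1: "-1 + 1*\<alpha>^5 = 0" and c2: "1 + -1*\<delta>^5 = 0"
      assume iff: "\<forall>v1 v2 v3 v4. (\<exists>a b. v1 = a*p2+b*q2 \<and> v2 = a*p4+b*q4 \<and> v3 = a*p1+b*q1 \<and> v4 = a*p3+b*q3) \<longleftrightarrow> (v3 = \<alpha>*v1 \<and> v4 = \<delta>*v2)"
      have r: "(x,y,z,w) \<in> L \<longleftrightarrow> (x = \<alpha>*y \<and> z = \<delta>*w)" for x y z w
        using mem[of x y z w] iff[rule_format, of y w x z] by blast
      have k1: "\<alpha>^5 = 1" by (rule pw_m_p[OF c1])
      have k2: "\<delta>^5 = 1" by (rule pw_p_m[OF c2])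
      have n1: "\<alpha> \<noteq> 0" using k1 by auto
      have n2: "\<delta> \<noteq> 0" using k2 by auto
      have "L = LA \<alpha> \<delta>"
        unfolding LA_def using r n1 n2 by (intro setI4) (auto simp: field_simps)
      moreover have "\<alpha>^5 = 1" "\<delta>^5 = 1" using k1 k2 by (simp_all add: power_one_over)
      ultimately show "std_line L" unfolding std_line_def by blast
    next
      fix \<alpha> \<delta> :: complex
      assume c1: "-1 + -1*\<alpha>^5 = 0" and c2: "1 + 1*\<delta>^5 = 0"
      assume iff: "\<forall>v1 v2 v3 v4. (\<exists>a b. v1 = a*p2+b*q2 \<and> v2 = a*p4+b*q4 \<and> v3 = a*p1+b*q1 \<and> v4 = a*p3+b*q3) \<longleftrightarrow> (v4 = \<alpha>*v1 \<and> v3 = \<delta>*v2)"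
      have r: "(x,y,z,w) \<in> L \<longleftrightarrow> (z = \<alpha>*y \<and> x = \<delta>*w)" for x y z w
        using mem[of x y z w] iff[rule_format, of y w x z] by blast
      have k1: "\<alpha>^5 = -1" by (rule pw_m_m[OF c1])
      have k2: "\<delta>^5 = -1" by (rule pw_p_p[OF c2])
      have n1: "\<alpha> \<noteq> 0" using k1 by auto
      have n2: "\<delta> \<noteq> 0" using k2 by auto
      have "L = LC \<delta> (1/\<alpha>)"
        unfolding LC_def using r n1 n2 by (intro setI4) (auto simp: field_simps)
      moreover have "\<delta>^5 = -1" "(1/\<alpha>)^5 = -1" using k1 k2 by (simp_all add: power_one_over)
      ultimately show "std_line L" unfolding std_line_def by blast
    qed
  qed
  have case5: "p3*q4 - p4*q3 \<noteq> 0 \<Longrightarrow> std_line L"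
  proof -
    assume D: "p3*q4 - p4*q3 \<noteq> 0"
    have FF: "\<forall>a b. (-1)*(a*p3+b*q3)^5 + (1)*(a*p4+b*q4)^5 + (1)*(a*p1+b*q1)^5 + (-1)*(a*p2+b*q2)^5 = 0"
    proof (intro allI)
      fix a b show "(-1)*(a*p3+b*q3)^5 + (1)*(a*p4+b*q4)^5 + (1)*(a*p1+b*q1)^5 + (-1)*(a*p2+b*q2)^5 = 0" using F[of a b] by (simp add: algebra_simps)
    qed
    from core_line[where ?e1.0="-1" and ?e2.0="1" and ?e3.0="1" and ?e4.0="-1" and ?p1.0="p3" and ?p2.0="p4" and ?p3.0="p1" and ?p4.0="p2" and ?q1.0="q3" and ?q2.0="q4" and ?q3.0="q1" and ?q4.0="q2", OF ne(2) ne(1) ne(1) ne(2) D FF]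
    show "std_line L"
    proof (elim disjE exE conjE)
      fix \<alpha> \<delta> :: complex
      assume c1: "-1 + 1*\<alpha>^5 = 0" and c2: "1 + -1*\<delta>^5 = 0"
      assume iff: "\<forall>v1 v2 v3 v4. (\<exists>a b. v1 = a*p3+b*q3 \<and> v2 = a*p4+b*q4 \<and> v3 = a*p1+b*q1 \<and> v4 = a*p2+b*q2) \<longleftrightarrow> (v3 = \<alpha>*v1 \<and> v4 = \<delta>*v2)"
      have r: "(x,y,z,w) \<in> L \<longleftrightarrow> (x = \<alpha>*z \<and> y = \<delta>*w)" for x y z w
        using mem[of x y z w] iff[rule_format, of z w x y] by blast
      have k1: "\<alpha>^5 = 1" by (rule pw_m_p[OF c1])
      have k2: "\<delta>^5 = 1" by (rule pw_p_m[OF c2])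
      have n1: "\<alpha> \<noteq> 0" using k1 by auto
      have n2: "\<delta> \<noteq> 0" using k2 by auto
      have "L = LB \<alpha> \<delta>"
        unfolding LB_def using r n1 n2 by (intro setI4) (auto simp: field_simps)
      moreover have "\<alpha>^5 = 1" "\<delta>^5 = 1" using k1 k2 by (simp_all add: power_one_over)
      ultimately show "std_line L" unfolding std_line_def by blast
    next
      fix \<alpha> \<delta> :: complex
      assume c1: "-1 + -1*\<alpha>^5 = 0" and c2: "1 + 1*\<delta>^5 = 0"
      assume iff: "\<forall>v1 v2 v3 v4. (\<exists>a b. v1 = a*p3+b*q3 \<and> v2 = a*p4+b*q4 \<and> v3 = a*p1+b*q1 \<and> v4 = a*p2+b*q2) \<longleftrightarrow> (v4 = \<alpha>*v1 \<and> v3 = \<delta>*v2)"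
      have r: "(x,y,z,w) \<in> L \<longleftrightarrow> (y = \<alpha>*z \<and> x = \<delta>*w)" for x y z w
        using mem[of x y z w] iff[rule_format, of z w x y] by blast
      have k1: "\<alpha>^5 = -1" by (rule pw_m_m[OF c1])
      have k2: "\<delta>^5 = -1" by (rule pw_p_p[OF c2])
      have n1: "\<alpha> \<noteq> 0" using k1 by auto
      have n2: "\<delta> \<noteq> 0" using k2 by auto
      have "L = LC \<delta> \<alpha>"
        unfolding LC_def using r n1 n2 by (intro setI4) (auto simp: field_simps)
      moreover have "\<delta>^5 = -1" "\<alpha>^5 = -1" using k1 k2 by (simp_all add: power_one_over)
      ultimately show "std_line L" unfolding std_line_def by blast
    qed
  qed
  show ?thesis using minors case0 case1 case2 case3 case4 case5 by blast
qed

definition U5 :: "complex set" where "U5 = {z. z^5 = 1}"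

lemma U5_card: "card U5 = 5" unfolding U5_def by (rule card_roots_unity_eq) simp
lemma U5_fin: "finite U5" unfolding U5_def by (rule finite_roots_unity) simp
lemma U5_nz: "a \<in> U5 \<Longrightarrow> a \<noteq> 0" unfolding U5_def by auto
lemma U5_mult: "a \<in> U5 \<Longrightarrow> b \<in> U5 \<Longrightarrow> a*b \<in> U5" unfolding U5_def by (simp add: power_mult_distrib)
lemma U5_div: "a \<in> U5 \<Longrightarrow> b \<in> U5 \<Longrightarrow> a/b \<in> U5" unfolding U5_def by (simp add: power_divide)
lemma U5_one: "1 \<in> U5" unfolding U5_def by simp
lemma U5_inv: "a \<in> U5 \<Longrightarrow> 1/a \<in> U5" using U5_div[OF U5_one] by simp
lemma U5_sq_inj: assumes "a \<in> U5" "b \<in> U5" "a^2 = b^2" shows "a = b"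
proof -
  have "a = (a^2)^3" using assms(1) unfolding U5_def by (simp add: power_mult[symmetric] eval_nat_numeral)
  also have "\<dots> = (b^2)^3" using assms(3) by simp
  also have "\<dots> = b" using assms(2) unfolding U5_def by (simp add: power_mult[symmetric] eval_nat_numeral)
  finally show ?thesis .
qed

lemma U5_pow_one:
  assumes "r \<in> U5" "r^k = 1" "0 < k" "k < 5" shows "r = 1"
proof -
  have r5: "r^5 = 1" using assms(1) unfolding U5_def by simp
  consider "k = 1" | "k = 2" | "k = 3" | "k = 4" using assms(3,4) by linarith
  then show ?thesis
  proof cases
    case 1 then show ?thesis using assms(2) by simp
  next
    case 2
    have r2: "r^2 = 1" using assms(2) 2 by simp
    have "r = (r^2)^2 * r" using r2 by simp
    also have "\<dots> = r^5" by (simp add: eval_nat_numeral)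
    finally show ?thesis using r5 by simp
  next
    case 3
    have r3: "r^3 = 1" using assms(2) 3 by simp
    have "r^2 = r^3 * r^2" using r3 by simp
    also have "\<dots> = r^5" by (simp add: eval_nat_numeral)
    finally have r2: "r^2 = 1" using r5 by simp
    have "r = r^2 * r" using r2 by simp
    also have "\<dots> = r^3" by (simp add: eval_nat_numeral)
    finally show ?thesis using r3 by simp
  next
    case 4
    have r4: "r^4 = 1" using assms(2) 4 by simp
    have "r = r^4 * r" using r4 by simp
    also have "\<dots> = r^5" by (simp add: eval_nat_numeral)
    finally show ?thesis using r5 by simp
  qed
qed

lemma orbit:
  assumes X: "X \<subseteq> U5" and x: "x \<in> X" and r: "r \<in> U5" "r \<noteq> 1"
    and inv: "\<And>y. y \<in> X \<Longrightarrow> r*y \<in> X"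
  shows "X = U5"
proof -
  have pw: "r^k * x \<in> X" for k
    by (induction k) (use x inv in \<open>auto simp: mult.assoc\<close>)
  have xnz: "x \<noteq> 0" using X x U5_nz by auto
  have rnz: "r \<noteq> 0" using r U5_nz by auto
  have inj: "inj_on (\<lambda>k. r^k * x) {..<5}"
  proof (rule inj_onI)
    fix i j assume i: "i \<in> {..<(5::nat)}" and j: "j \<in> {..<(5::nat)}" and e: "r^i * x = r^j * x"
    then have e2: "r^i = r^j" using xnz by simp
    show "i = j"
    proof (rule ccontr)
      assume "i \<noteq> j"
      then consider "i < j" | "j < i" by linarith
      then show False
      proof cases
        case 1
        have "r^j = r^i * r^(j-i)" using 1 by (simp add: power_add[symmetric])
        then have "r^(j-i) = 1" using e2 rnz by simp
        then have "r = 1" using U5_pow_one[OF r(1)] 1 j by simp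
        then show False using r by simp
      next
        case 2
        have "r^i = r^j * r^(i-j)" using 2 by (simp add: power_add[symmetric])
        then have "r^(i-j) = 1" using e2 rnz by simp
        then have "r = 1" using U5_pow_one[OF r(1)] 2 i by simp
        then show False using r by simp
      qed
    qed
  qed
  have "card ((\<lambda>k. r^k * x) ` {..<5}) = 5" using card_image[OF inj] by simp
  moreover have "(\<lambda>k. r^k * x) ` {..<5} \<subseteq> X" using pw by auto
  ultimately have "5 \<le> card X" using X U5_fin by (metis card_mono finite_subset)
  then show ?thesis using X U5_fin U5_card by (metis card_seteq)
qed

lemma no_split:
  assumes XY: "X \<union> Y = U5" "X \<inter> Y = {}" and m: "m1 \<in> U5" "m2 \<in> U5"
    and disj: "((*) m1 ` X) \<inter> ((*) m2 ` Y) = {}"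
  shows "X = {} \<or> Y = {} \<or> m1 = m2"
proof (rule ccontr)
  assume "\<not> ?thesis"
  then obtain x where x: "x \<in> X" and Yne: "Y \<noteq> {}" and ne: "m1 \<noteq> m2" by auto
  define r where "r = m1/m2"
  have m2nz: "m2 \<noteq> 0" using m U5_nz by auto
  have r: "r \<in> U5" using m U5_div r_def by auto
  have r1: "r \<noteq> 1" using ne m2nz r_def by auto
  have inv: "r*y \<in> X" if y: "y \<in> X" for y
  proof -
    have "r*y \<in> U5" using r y XY U5_mult by auto
    then have "r*y \<in> X \<or> r*y \<in> Y" using XY by auto
    moreover have "r*y \<notin> Y"
    proof
      assume "r*y \<in> Y"
      then have "m2*(r*y) \<in> (*) m2 ` Y" by auto
      moreover have "m2*(r*y) = m1*y" using m2nz r_def by simp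
      ultimately show False using disj y by auto
    qed
    ultimately show ?thesis by auto
  qed
  have "X = U5" using orbit[of X x r] XY x r r1 inv by auto
  then show False using XY Yne by auto
qed


definition fam :: "(complex \<times> complex) set \<Rightarrow> bool" where
  "fam P \<longleftrightarrow> P \<subseteq> U5 \<times> U5 \<and> (\<forall>p\<in>P. \<forall>q\<in>P. p \<noteq> q \<longrightarrow> fst p \<noteq> fst q \<and> snd p \<noteq> snd q)"

definition uf :: "complex \<times> complex \<Rightarrow> complex" where "uf p = fst p / snd p"
definition vf :: "complex \<times> complex \<Rightarrow> complex" where "vf p = fst p * snd p"

lemma sq_uv: "p \<in> U5 \<times> U5 \<Longrightarrow> (fst p)^2 = uf p * vf p"
  using U5_nz[of "snd p"] by (auto simp: uf_def vf_def power2_eq_square)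

lemma fam_eq: "fam P \<Longrightarrow> p \<in> P \<Longrightarrow> q \<in> P \<Longrightarrow> fst p = fst q \<Longrightarrow> p = q"
  unfolding fam_def by blast
lemma fam_eq2: "fam P \<Longrightarrow> p \<in> P \<Longrightarrow> q \<in> P \<Longrightarrow> snd p = snd q \<Longrightarrow> p = q"
  unfolding fam_def by blast
lemma fam_sub: "fam P \<Longrightarrow> p \<in> P \<Longrightarrow> fst p \<in> U5 \<and> snd p \<in> U5"
  unfolding fam_def by auto

lemma fam_finite: "fam P \<Longrightarrow> finite P"
  unfolding fam_def using U5_fin by (meson finite_SigmaI finite_subset)

lemma fam_card5: assumes "fam P" shows "card P \<le> 5"
proof -
  have "inj_on fst P" using fam_eq[OF assms] by (meson inj_onI)
  then have "card P = card (fst ` P)" by (simp add: card_image)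
  also have "\<dots> \<le> card U5" using fam_sub[OF assms] U5_fin by (intro card_mono) auto
  finally show ?thesis using U5_card by simp
qed

lemma fam_fst_all: assumes "fam P" "card P = 5" shows "fst ` P = U5" "snd ` P = U5"
proof -
  have "inj_on fst P" using fam_eq[OF assms(1)] by (meson inj_onI)
  then have "card (fst ` P) = 5" using assms(2) by (simp add: card_image)
  moreover have "fst ` P \<subseteq> U5" using fam_sub[OF assms(1)] by auto
  ultimately show "fst ` P = U5" using U5_fin U5_card by (metis card_subset_eq)
  have "inj_on snd P" using fam_eq2[OF assms(1)] by (meson inj_onI)
  then have "card (snd ` P) = 5" using assms(2) by (simp add: card_image)
  moreover have "snd ` P \<subseteq> U5" using fam_sub[OF assms(1)] by auto
  ultimately show "snd ` P = U5" using U5_fin U5_card by (metis card_subset_eq)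
qed

lemma fam_prod: assumes "fam P" shows "card P \<le> card (uf ` P) * card (vf ` P)"
proof -
  have fin: "finite P" using fam_finite[OF assms] .
  have "inj_on (\<lambda>p. (uf p, vf p)) P"
  proof (rule inj_onI)
    fix p q assume p: "p \<in> P" and q: "q \<in> P" and e: "(uf p, vf p) = (uf q, vf q)"
    have pu: "p \<in> U5 \<times> U5" "q \<in> U5 \<times> U5" using fam_sub[OF assms] p q by (auto simp: mem_Times_iff)
    have "(fst p)^2 = (fst q)^2" using sq_uv[OF pu(1)] sq_uv[OF pu(2)] e by simp
    then have "fst p = fst q" using U5_sq_inj fam_sub[OF assms] p q by blast
    then show "p = q" using fam_eq[OF assms p q] by simp
  qed
  then have "card P = card ((\<lambda>p. (uf p, vf p)) ` P)" by (simp add: card_image)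
  also have "\<dots> \<le> card (uf ` P \<times> vf ` P)" using fin by (intro card_mono) auto
  also have "\<dots> = card (uf ` P) * card (vf ` P)" by (simp add: card_cartesian_product)
  finally show ?thesis .
qed

lemma U5_uf: "p \<in> U5 \<times> U5 \<Longrightarrow> uf p \<in> U5" unfolding uf_def using U5_div by (auto simp: mem_Times_iff)
lemma U5_vf: "p \<in> U5 \<times> U5 \<Longrightarrow> vf p \<in> U5" unfolding vf_def using U5_mult by (auto simp: mem_Times_iff)

lemma fam_u_not2: assumes "fam P" "card P = 5" shows "card (uf ` P) \<noteq> 2"
proof
  assume "card (uf ` P) = 2"
  then obtain c c' where cc: "uf ` P = {c, c'}" "c \<noteq> c'" by (meson card_2_iff)
  define X where "X = fst ` {p\<in>P. uf p = c}"
  define Y where "Y = fst ` {p\<in>P. uf p = c'}"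
  have PU: "p \<in> P \<Longrightarrow> p \<in> U5 \<times> U5" for p using fam_sub[OF assms(1)] by (auto simp: mem_Times_iff)
  have cU: "c \<in> U5" "c' \<in> U5" using cc(1) PU U5_uf by (metis imageE insertCI)+
  have XY1: "X \<union> Y = U5"
  proof -
    have "X \<union> Y = fst ` P" unfolding X_def Y_def using cc(1) by auto
    then show ?thesis using fam_fst_all[OF assms] by simp
  qed
  have XY2: "X \<inter> Y = {}" unfolding X_def Y_def using fam_eq[OF assms(1)] cc(2) by auto
  have disj: "((*) (1/c) ` X) \<inter> ((*) (1/c') ` Y) = {}"
  proof -
    have "snd p = (1/c) * fst p" if "p \<in> P" "uf p = c" for p c
    proof -
      have a: "fst p \<noteq> 0" "snd p \<noteq> 0" using PU[OF that(1)] U5_nz by (auto simp: mem_Times_iff)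
      show ?thesis unfolding that(2)[symmetric] uf_def using a by (simp add: field_simps)
    qed
    note sp = this
    show ?thesis
    proof (rule ccontr)
      assume "\<not> ?thesis"
      then obtain z where "z \<in> (*) (1/c) ` X" "z \<in> (*) (1/c') ` Y" by blast
      then obtain p q where p: "p \<in> P" "uf p = c" "z = (1/c) * fst p"
        and q: "q \<in> P" "uf q = c'" "z = (1/c') * fst q" unfolding X_def Y_def by blast
      have "snd p = snd q" using sp[OF p(1,2)] sp[OF q(1,2)] p(3) q(3) by simp
      then have "p = q" using fam_eq2[OF assms(1) p(1) q(1)] by simp
      then show False using p(2) q(2) cc(2) by simp
    qed
  qed
  have "X = {} \<or> Y = {} \<or> 1/c = 1/c'"
    by (rule no_split[OF XY1 XY2 _ _ disj]) (use cU U5_inv in auto)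
  moreover have "c \<in> uf ` P" "c' \<in> uf ` P" using cc(1) by auto
  then have "X \<noteq> {}" "Y \<noteq> {}" unfolding X_def Y_def by blast+
  ultimately show False using cc(2) by simp
qed


lemma U5_inv_img: "(\<lambda>a. 1/a) ` U5 = U5"
proof
  show "(\<lambda>a. 1/a) ` U5 \<subseteq> U5" using U5_inv by auto
  show "U5 \<subseteq> (\<lambda>a. 1/a) ` U5"
  proof
    fix z assume "z \<in> U5"
    then have "1/z \<in> U5" "z = 1/(1/z)" using U5_inv by auto
    then show "z \<in> (\<lambda>a. 1/a) ` U5" by blast
  qed
qed

lemma fam_v_not2: assumes "fam P" "card P = 5" shows "card (vf ` P) \<noteq> 2"
proof
  assume "card (vf ` P) = 2"
  then obtain c c' where cc: "vf ` P = {c, c'}" "c \<noteq> c'" by (meson card_2_iff)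
  define X where "X = (\<lambda>a. 1/a) ` fst ` {p\<in>P. vf p = c}"
  define Y where "Y = (\<lambda>a. 1/a) ` fst ` {p\<in>P. vf p = c'}"
  have PU: "p \<in> P \<Longrightarrow> p \<in> U5 \<times> U5" for p using fam_sub[OF assms(1)] by (auto simp: mem_Times_iff)
  have cU: "c \<in> U5" "c' \<in> U5" using cc(1) PU U5_vf by (metis imageE insertCI)+
  have XY1: "X \<union> Y = U5"
  proof -
    have "fst ` {p\<in>P. vf p = c} \<union> fst ` {p\<in>P. vf p = c'} = fst ` P" using cc(1) by auto
    then have "X \<union> Y = (\<lambda>a. 1/a) ` fst ` P" unfolding X_def Y_def by (metis image_Un)
    then show ?thesis using fam_fst_all[OF assms] U5_inv_img by simp
  qed
  have XY2: "X \<inter> Y = {}"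
  proof (rule ccontr)
    assume "X \<inter> Y \<noteq> {}"
    then obtain p q where p: "p \<in> P" "vf p = c" and q: "q \<in> P" "vf q = c'" and e: "1/fst p = 1/fst q"
      unfolding X_def Y_def by blast
    have "fst p = fst q" using e by simp
    then have "p = q" using fam_eq[OF assms(1) p(1) q(1)] by simp
    then show False using p(2) q(2) cc(2) by simp
  qed
  have disj: "((*) c ` X) \<inter> ((*) c' ` Y) = {}"
  proof -
    have "snd p = c * (1/fst p)" if "p \<in> P" "vf p = c" for p c
    proof -
      have a: "fst p \<noteq> 0" "snd p \<noteq> 0" using PU[OF that(1)] U5_nz by (auto simp: mem_Times_iff)
      show ?thesis unfolding that(2)[symmetric] vf_def using a by (simp add: field_simps)
    qed
    note sp = this
    show ?thesis
    proof (rule ccontr)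
      assume "\<not> ?thesis"
      then obtain z where "z \<in> (*) c ` X" "z \<in> (*) c' ` Y" by blast
      then obtain p q where p: "p \<in> P" "vf p = c" "z = c * (1/fst p)"
        and q: "q \<in> P" "vf q = c'" "z = c' * (1/fst q)" unfolding X_def Y_def by blast
      have "snd p = snd q" using sp[OF p(1,2)] sp[OF q(1,2)] p(3) q(3) by simp
      then have "p = q" using fam_eq2[OF assms(1) p(1) q(1)] by simp
      then show False using p(2) q(2) cc(2) by simp
    qed
  qed
  have "X = {} \<or> Y = {} \<or> c = c'"
    by (rule no_split[OF XY1 XY2 cU disj])
  moreover have "c \<in> vf ` P" "c' \<in> vf ` P" using cc(1) by auto
  then have "X \<noteq> {}" "Y \<noteq> {}" unfolding X_def Y_def by blast+
  ultimately show False using cc(2) by simp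
qed

lemma fam_u1: assumes "fam P" "card (uf ` P) = 1" shows "card (vf ` P) = card P"
proof -
  obtain c where c: "uf ` P = {c}" using assms(2) by (meson card_1_singletonE)
  have "inj_on vf P"
  proof (rule inj_onI)
    fix p q assume p: "p \<in> P" and q: "q \<in> P" and e: "vf p = vf q"
    have pu: "p \<in> U5 \<times> U5" "q \<in> U5 \<times> U5" using fam_sub[OF assms(1)] p q by (auto simp: mem_Times_iff)
    have "uf p = uf q" using c p q by (metis imageI singletonD)
    then have "(fst p)^2 = (fst q)^2" using sq_uv[OF pu(1)] sq_uv[OF pu(2)] e by simp
    then have "fst p = fst q" using U5_sq_inj fam_sub[OF assms(1)] p q by blast
    then show "p = q" using fam_eq[OF assms(1) p q] by simp
  qed
  then show ?thesis by (simp add: card_image)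
qed

lemma fam_v1: assumes "fam P" "card (vf ` P) = 1" shows "card (uf ` P) = card P"
proof -
  obtain c where c: "vf ` P = {c}" using assms(2) by (meson card_1_singletonE)
  have "inj_on uf P"
  proof (rule inj_onI)
    fix p q assume p: "p \<in> P" and q: "q \<in> P" and e: "uf p = uf q"
    have pu: "p \<in> U5 \<times> U5" "q \<in> U5 \<times> U5" using fam_sub[OF assms(1)] p q by (auto simp: mem_Times_iff)
    have "vf p = vf q" using c p q by (metis imageI singletonD)
    then have "(fst p)^2 = (fst q)^2" using sq_uv[OF pu(1)] sq_uv[OF pu(2)] e by simp
    then have "fst p = fst q" using U5_sq_inj fam_sub[OF assms(1)] p q by blast
    then show "p = q" using fam_eq[OF assms(1) p q] by simp
  qed
  then show ?thesis by (simp add: card_image)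
qed

lemma fam_img_card: assumes "fam P" shows "card (uf ` P) \<le> 5" "card (vf ` P) \<le> 5"
proof -
  have "uf ` P \<subseteq> U5" "vf ` P \<subseteq> U5" using fam_sub[OF assms] U5_uf U5_vf by (auto simp: mem_Times_iff)
  then show "card (uf ` P) \<le> 5" "card (vf ` P) \<le> 5" using U5_card U5_fin card_mono by metis+
qed

lemma small_prod: "(x::nat) + y \<le> 3 \<Longrightarrow> x*y \<le> 2"
proof -
  assume h: "x + y \<le> 3"
  then consider "x = 0" | "x = 1" | "x = 2" | "x = 3" by linarith
  then show ?thesis by cases (use h in auto)
qed

lemma fam_main:
  assumes "fam P"
  shows "card P \<le> 5" "4 \<le> card P \<Longrightarrow> 4 \<le> card (uf ` P) + card (vf ` P)"
        "card P = 5 \<Longrightarrow> 6 \<le> card (uf ` P) + card (vf ` P)"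
proof -
  show "card P \<le> 5" by (rule fam_card5[OF assms])
  have pr: "card P \<le> card (uf ` P) * card (vf ` P)" by (rule fam_prod[OF assms])
  show "4 \<le> card (uf ` P) + card (vf ` P)" if "4 \<le> card P"
  proof (rule ccontr)
    assume "\<not> ?thesis"
    then have "card (uf ` P) + card (vf ` P) \<le> 3" by simp
    then have "card (uf ` P) * card (vf ` P) \<le> 2" by (rule small_prod)
    then show False using that pr by simp
  qed
  show "6 \<le> card (uf ` P) + card (vf ` P)" if c5: "card P = 5"
  proof -
    have u2: "card (uf ` P) \<noteq> 2" by (rule fam_u_not2[OF assms c5])
    have v2: "card (vf ` P) \<noteq> 2" by (rule fam_v_not2[OF assms c5])
    have fin: "finite P" by (rule fam_finite[OF assms])
    have ne: "P \<noteq> {}" using c5 by auto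
    have u0: "card (uf ` P) \<noteq> 0" "card (vf ` P) \<noteq> 0" using fin ne by auto
    have u1: "card (uf ` P) = 1 \<Longrightarrow> card (vf ` P) = 5" using fam_u1[OF assms] c5 by simp
    have v1: "card (vf ` P) = 1 \<Longrightarrow> card (uf ` P) = 5" using fam_v1[OF assms] c5 by simp
    show ?thesis using u2 v2 u0 u1 v1 by linarith
  qed
qed

lemma LA_inj: "LA a b = LA a' b' \<Longrightarrow> a = a' \<and> b = b'"
proof -
  assume e: "LA a b = LA a' b'"
  have "(a,1,0,0) \<in> LA a b" "(0,0,b,1) \<in> LA a b" unfolding LA_def by auto
  then have "(a,1,0,0) \<in> LA a' b'" "(0,0,b,1) \<in> LA a' b'" using e by auto
  then show ?thesis unfolding LA_def by auto
qed
lemma LB_inj: "LB a b = LB a' b' \<Longrightarrow> a = a' \<and> b = b'"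
proof -
  assume e: "LB a b = LB a' b'"
  have "(a,0,1,0) \<in> LB a b" "(0,b,0,1) \<in> LB a b" unfolding LB_def by auto
  then have "(a,0,1,0) \<in> LB a' b'" "(0,b,0,1) \<in> LB a' b'" using e by auto
  then show ?thesis unfolding LB_def by auto
qed
lemma LC_inj: "LC a b = LC a' b' \<Longrightarrow> a = a' \<and> b = b'"
proof -
  assume e: "LC a b = LC a' b'"
  have "(a,0,0,1) \<in> LC a b" "(0,b,1,0) \<in> LC a b" unfolding LC_def by auto
  then have "(a,0,0,1) \<in> LC a' b'" "(0,b,1,0) \<in> LC a' b'" using e by auto
  then show ?thesis unfolding LC_def by auto
qed

lemma AB_ne: "a \<noteq> 0 \<Longrightarrow> LA a b \<noteq> LB c d"
proof
  assume "a \<noteq> 0" "LA a b = LB c d"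
  moreover have "(a,1,0,0) \<in> LA a b" unfolding LA_def by auto
  ultimately show False unfolding LB_def by auto
qed
lemma AC_ne: "a \<noteq> 0 \<Longrightarrow> LA a b \<noteq> LC c d"
proof
  assume "a \<noteq> 0" "LA a b = LC c d"
  moreover have "(a,1,0,0) \<in> LA a b" unfolding LA_def by auto
  ultimately show False unfolding LC_def by auto
qed
lemma BC_ne: "a \<noteq> 0 \<Longrightarrow> LB a b \<noteq> LC c d"
proof
  assume "a \<noteq> 0" "LB a b = LC c d"
  moreover have "(a,0,1,0) \<in> LB a b" unfolding LB_def by auto
  ultimately show False unfolding LC_def by auto
qed

lemma meet_contra: "v \<in> L \<Longrightarrow> v \<in> M \<Longrightarrow> v \<noteq> (0,0,0,0) \<Longrightarrow> disjoint_lines L M \<Longrightarrow> False"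
  unfolding disjoint_lines_def by blast

lemma AA_d: "disjoint_lines (LA a b) (LA a' b') \<Longrightarrow> a \<noteq> a' \<and> b \<noteq> b'"
proof
  assume d: "disjoint_lines (LA a b) (LA a' b')"
  show "a \<noteq> a'"
  proof
    assume "a = a'" then show False using meet_contra[OF _ _ _ d, of "(a,1,0,0)"] unfolding LA_def by auto
  qed
  show "b \<noteq> b'"
  proof
    assume "b = b'" then show False using meet_contra[OF _ _ _ d, of "(0,0,b,1)"] unfolding LA_def by auto
  qed
qed
lemma BB_d: "disjoint_lines (LB a b) (LB a' b') \<Longrightarrow> a \<noteq> a' \<and> b \<noteq> b'"
proof
  assume d: "disjoint_lines (LB a b) (LB a' b')"
  show "a \<noteq> a'"
  proof
    assume "a = a'" then show False using meet_contra[OF _ _ _ d, of "(a,0,1,0)"] unfolding LB_def by auto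
  qed
  show "b \<noteq> b'"
  proof
    assume "b = b'" then show False using meet_contra[OF _ _ _ d, of "(0,b,0,1)"] unfolding LB_def by auto
  qed
qed
lemma CC_d: "disjoint_lines (LC a b) (LC a' b') \<Longrightarrow> a \<noteq> a' \<and> b \<noteq> b'"
proof
  assume d: "disjoint_lines (LC a b) (LC a' b')"
  show "a \<noteq> a'"
  proof
    assume "a = a'" then show False using meet_contra[OF _ _ _ d, of "(a,0,0,1)"] unfolding LC_def by auto
  qed
  show "b \<noteq> b'"
  proof
    assume "b = b'" then show False using meet_contra[OF _ _ _ d, of "(0,b,1,0)"] unfolding LC_def by auto
  qed
qed
lemma AB_d: "disjoint_lines (LA a b) (LB c d) \<Longrightarrow> a*d \<noteq> b*c"
proof
  assume d: "disjoint_lines (LA a b) (LB c d)" and e: "a*d = b*c"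
  show False using meet_contra[OF _ _ _ d, of "(a*d,d,b,1)"] e unfolding LA_def LB_def by (auto simp: ac_simps)
qed
lemma AC_d: "disjoint_lines (LA a b) (LC c d) \<Longrightarrow> a*b*d \<noteq> c"
proof
  assume d: "disjoint_lines (LA a b) (LC c d)" and e: "a*b*d = c"
  show False using meet_contra[OF _ _ _ d, of "(a*(d*b),d*b,b,1)"] e unfolding LA_def LC_def by (auto simp: ac_simps)
qed
lemma BC_d: "a \<noteq> 0 \<Longrightarrow> disjoint_lines (LB a b) (LC c d) \<Longrightarrow> a*b \<noteq> c*d"
proof
  assume a: "a \<noteq> 0" and d: "disjoint_lines (LB a b) (LC c d)" and e: "a*b = c*d"
  show False using meet_contra[OF _ _ _ d, of "(a*c,b*a,c,a)"] e a unfolding LB_def LC_def by (auto simp: ac_simps)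
qed

lemma card_disj_le5: assumes "X \<subseteq> U5" "Y \<subseteq> U5" "X \<inter> Y = {}" shows "card X + card Y \<le> 5"
proof -
  have "finite X" using assms(1) U5_fin by (rule finite_subset)
  moreover have "finite Y" using assms(2) U5_fin by (rule finite_subset)
  ultimately
  have "card X + card Y = card (X \<union> Y)" using assms(3) by (simp add: card_Un_disjoint)
  also have "\<dots> \<le> card U5" using assms U5_fin by (intro card_mono) auto
  finally show ?thesis using U5_card by simp
qed

lemma neg_pow5: "(c::complex)^5 = -1 \<Longrightarrow> (-c)^5 = 1"
  by (simp add: power_minus_odd)

theorem upper:
  assumes on: "\<forall>L\<in>S. line_on_F5 L" and dj: "\<forall>L\<in>S. \<forall>M\<in>S. L \<noteq> M \<longrightarrow> disjoint_lines L M"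
  shows "finite S \<and> card S \<le> 13"
proof -
  define fA where "fA = (\<lambda>p::complex\<times>complex. LA (fst p) (snd p))"
  define fB where "fB = (\<lambda>p::complex\<times>complex. LB (fst p) (snd p))"
  define fC where "fC = (\<lambda>p::complex\<times>complex. LC (- fst p) (- snd p))"
  define PA where "PA = {p \<in> U5 \<times> U5. fA p \<in> S}"
  define PB where "PB = {p \<in> U5 \<times> U5. fB p \<in> S}"
  define PC where "PC = {p \<in> U5 \<times> U5. fC p \<in> S}"
  have cover: "S \<subseteq> fA ` PA \<union> fB ` PB \<union> fC ` PC"
  proof
    fix L assume L: "L \<in> S"
    then have "std_line L" using on classify by blast
    then consider (A) a b where "a^5 = 1" "b^5 = 1" "L = LA a b"
      | (B) a b where "a^5 = 1" "b^5 = 1" "L = LB a b"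
      | (C) a b where "a^5 = -1" "b^5 = -1" "L = LC a b"
      unfolding std_line_def by blast
    then show "L \<in> fA ` PA \<union> fB ` PB \<union> fC ` PC"
    proof cases
      case A
      then have "(a,b) \<in> PA" using L unfolding PA_def fA_def U5_def by auto
      moreover have "L = fA (a,b)" using A unfolding fA_def by simp
      ultimately show ?thesis by blast
    next
      case B
      then have "(a,b) \<in> PB" using L unfolding PB_def fB_def U5_def by auto
      moreover have "L = fB (a,b)" using B unfolding fB_def by simp
      ultimately show ?thesis by blast
    next
      case C
      then have "(-a,-b) \<in> PC" using L neg_pow5 unfolding PC_def fC_def U5_def by auto
      moreover have "L = fC (-a,-b)" using C unfolding fC_def by simp
      ultimately show ?thesis by blast
    qed
  qed
  have sub: "PA \<subseteq> U5 \<times> U5" "PB \<subseteq> U5 \<times> U5" "PC \<subseteq> U5 \<times> U5" unfolding PA_def PB_def PC_def by auto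
  have famA: "fam PA" unfolding fam_def
  proof (intro conjI ballI impI)
    show "PA \<subseteq> U5 \<times> U5" by (rule sub)
    fix p q assume p: "p \<in> PA" and q: "q \<in> PA" and ne: "p \<noteq> q"
    have "fA p \<noteq> fA q" using ne LA_inj unfolding fA_def by (metis prod.collapse)
    then have "disjoint_lines (fA p) (fA q)" using dj p q unfolding PA_def by auto
    then show "fst p \<noteq> fst q" "snd p \<noteq> snd q" using AA_d unfolding fA_def by auto
  qed
  have famB: "fam PB" unfolding fam_def
  proof (intro conjI ballI impI)
    show "PB \<subseteq> U5 \<times> U5" by (rule sub)
    fix p q assume p: "p \<in> PB" and q: "q \<in> PB" and ne: "p \<noteq> q"
    have "fB p \<noteq> fB q" using ne LB_inj unfolding fB_def by (metis prod.collapse)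
    then have "disjoint_lines (fB p) (fB q)" using dj p q unfolding PB_def by auto
    then show "fst p \<noteq> fst q" "snd p \<noteq> snd q" using BB_d unfolding fB_def by auto
  qed
  have famC: "fam PC" unfolding fam_def
  proof (intro conjI ballI impI)
    show "PC \<subseteq> U5 \<times> U5" by (rule sub)
    fix p q assume p: "p \<in> PC" and q: "q \<in> PC" and ne: "p \<noteq> q"
    have "fC p \<noteq> fC q" using ne LC_inj unfolding fC_def by (metis neg_equal_iff_equal prod.collapse)
    then have "disjoint_lines (fC p) (fC q)" using dj p q unfolding PC_def by auto
    then have "- fst p \<noteq> - fst q \<and> - snd p \<noteq> - snd q" unfolding fC_def by (rule CC_d)
    then show "fst p \<noteq> fst q" "snd p \<noteq> snd q" by auto
  qed
  have AB: "uf ` PA \<inter> uf ` PB = {}"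
  proof (rule ccontr)
    assume "uf ` PA \<inter> uf ` PB \<noteq> {}"
    then obtain p q where p: "p \<in> PA" and q: "q \<in> PB" and e: "uf p = uf q" by blast
    obtain a b where ab: "p = (a,b)" by (cases p)
    obtain c d where cd: "q = (c,d)" by (cases q)
    have nz: "a \<noteq> 0" "b \<noteq> 0" "c \<noteq> 0" "d \<noteq> 0" using p q sub U5_nz ab cd by auto
    have "fA p \<noteq> fB q" using AB_ne nz unfolding fA_def fB_def ab cd by simp
    then have "disjoint_lines (fA p) (fB q)" using dj p q unfolding PA_def PB_def by auto
    then have "a*d \<noteq> b*c" using AB_d unfolding fA_def fB_def ab cd by simp
    moreover have "a*d = b*c" using e nz unfolding uf_def ab cd by (simp add: field_simps)
    ultimately show False by simp
  qed
  have AC: "vf ` PA \<inter> uf ` PC = {}"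
  proof (rule ccontr)
    assume "vf ` PA \<inter> uf ` PC \<noteq> {}"
    then obtain p q where p: "p \<in> PA" and q: "q \<in> PC" and e: "vf p = uf q" by blast
    obtain a b where ab: "p = (a,b)" by (cases p)
    obtain c d where cd: "q = (c,d)" by (cases q)
    have nz: "a \<noteq> 0" "b \<noteq> 0" "c \<noteq> 0" "d \<noteq> 0" using p q sub U5_nz ab cd by auto
    have "fA p \<noteq> fC q" using AC_ne nz unfolding fA_def fC_def ab cd by simp
    then have "disjoint_lines (fA p) (fC q)" using dj p q unfolding PA_def PC_def by auto
    then have "a*b*(-d) \<noteq> -c" unfolding fA_def fC_def ab cd fst_conv snd_conv by (rule AC_d)
    moreover have "a*b*(-d) = -c" using e nz unfolding uf_def vf_def ab cd by (simp add: field_simps)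
    ultimately show False by simp
  qed
  have BC: "vf ` PB \<inter> vf ` PC = {}"
  proof (rule ccontr)
    assume "vf ` PB \<inter> vf ` PC \<noteq> {}"
    then obtain p q where p: "p \<in> PB" and q: "q \<in> PC" and e: "vf p = vf q" by blast
    obtain a b where ab: "p = (a,b)" by (cases p)
    obtain c d where cd: "q = (c,d)" by (cases q)
    have nz: "a \<noteq> 0" "b \<noteq> 0" "c \<noteq> 0" "d \<noteq> 0" using p q sub U5_nz ab cd by auto
    have "fB p \<noteq> fC q" using BC_ne nz unfolding fB_def fC_def ab cd by simp
    then have "disjoint_lines (fB p) (fC q)" using dj p q unfolding PB_def PC_def by auto
    then have "a*b \<noteq> (-c)*(-d)" using BC_d[OF nz(1)] unfolding fB_def fC_def ab cd fst_conv snd_conv by blast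
    moreover have "a*b = c*d" using e unfolding vf_def ab cd by simp
    ultimately show False by simp
  qed
  have imgs: "uf ` PA \<subseteq> U5" "vf ` PA \<subseteq> U5" "uf ` PB \<subseteq> U5" "vf ` PB \<subseteq> U5" "uf ` PC \<subseteq> U5" "vf ` PC \<subseteq> U5"
    using sub U5_uf U5_vf by blast+
  have c1: "card (uf ` PA) + card (uf ` PB) \<le> 5" by (rule card_disj_le5[OF imgs(1) imgs(3) AB])
  have c2: "card (vf ` PA) + card (uf ` PC) \<le> 5" by (rule card_disj_le5[OF imgs(2) imgs(5) AC])
  have c3: "card (vf ` PB) + card (vf ` PC) \<le> 5" by (rule card_disj_le5[OF imgs(4) imgs(6) BC])
  note mA = fam_main[OF famA] and mB = fam_main[OF famB] and mC = fam_main[OF famC]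
  have tot: "card PA + card PB + card PC \<le> 13"
    using c1 c2 c3 mA mB mC by linarith
  have finP: "finite PA" "finite PB" "finite PC" using fam_finite famA famB famC by auto
  have finS: "finite S" using cover finP by (meson finite_UnI finite_imageI finite_subset)
  have "card S \<le> card (fA ` PA \<union> fB ` PB \<union> fC ` PC)" using cover finP by (intro card_mono) auto
  also have "\<dots> \<le> card (fA ` PA) + card (fB ` PB) + card (fC ` PC)"
    by (meson add_le_mono card_Un_le le_refl order_trans)
  also have "\<dots> \<le> card PA + card PB + card PC"
    using card_image_le finP by (meson add_le_mono)
  finally show ?thesis using tot finS by simp
qed

definition zeta :: complex where "zeta = cis (2*pi/5)"

lemma zeta_pow: "zeta^k = cis (2*pi*real k/5)"
  unfolding zeta_def DeMoivre by (simp add: field_simps)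

lemma zeta5: "zeta^5 = 1"
  unfolding zeta_pow by simp

lemma zeta_mod: "zeta^k = zeta^(k mod 5)"
proof -
  have "zeta^k = zeta^(5*(k div 5) + k mod 5)" by simp
  also have "\<dots> = (zeta^5)^(k div 5) * zeta^(k mod 5)" by (simp only: power_add power_mult)
  finally show ?thesis using zeta5 by simp
qed

lemma zeta_inj: assumes "zeta^k = zeta^l" shows "k mod 5 = l mod 5"
proof -
  have inj: "inj_on (\<lambda>k. cis (2 * pi * real k / real 5)) {..<5}"
    using bij_betw_roots_unity[of 5] by (simp add: bij_betw_def)
  have "zeta^(k mod 5) = zeta^(l mod 5)" using assms zeta_mod by metis
  then have "cis (2 * pi * real (k mod 5) / real 5) = cis (2 * pi * real (l mod 5) / real 5)"
    unfolding zeta_pow by simp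
  then show ?thesis using inj_onD[OF inj] by simp
qed

lemma zeta_ne: "k mod 5 \<noteq> l mod 5 \<Longrightarrow> zeta^k \<noteq> zeta^l"
  using zeta_inj by blast

lemma zeta_nz: "zeta^k \<noteq> 0"
  unfolding zeta_pow by (simp add: cis_neq_zero)

lemma AA_c: "a \<noteq> a' \<Longrightarrow> b \<noteq> b' \<Longrightarrow> disjoint_lines (LA a b) (LA a' b')"
  unfolding disjoint_lines_def LA_def by auto
lemma BB_c: "a \<noteq> a' \<Longrightarrow> b \<noteq> b' \<Longrightarrow> disjoint_lines (LB a b) (LB a' b')"
  unfolding disjoint_lines_def LB_def by auto
lemma CC_c: "a \<noteq> a' \<Longrightarrow> b \<noteq> b' \<Longrightarrow> disjoint_lines (LC a b) (LC a' b')"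
  unfolding disjoint_lines_def LC_def by auto

lemma AB_c: assumes "a*d \<noteq> b*c" shows "disjoint_lines (LA a b) (LB c d)"
  unfolding disjoint_lines_def
proof
  show "LA a b \<inter> LB c d \<subseteq> {(0,0,0,0)}"
  proof
    fix v assume v: "v \<in> LA a b \<inter> LB c d"
    obtain x y z w where vv: "v = (x,y,z,w)" by (cases v) auto
    have e: "x = a*y" "z = b*w" "x = c*z" "y = d*w" using v unfolding vv LA_def LB_def by auto
    have h: "a*d*w = b*c*w" using e by (metis mult.assoc mult.commute)
    have "(a*d - b*c)*w = 0" by (simp only: left_diff_distrib h) simp
    then have "w = 0" using assms by simp
    then show "v \<in> {(0,0,0,0)}" using e vv by simp
  qed
  show "{(0,0,0,0)} \<subseteq> LA a b \<inter> LB c d" unfolding LA_def LB_def by auto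
qed

lemma AC_c: assumes "a*b*d \<noteq> c" shows "disjoint_lines (LA a b) (LC c d)"
  unfolding disjoint_lines_def
proof
  show "LA a b \<inter> LC c d \<subseteq> {(0,0,0,0)}"
  proof
    fix v assume v: "v \<in> LA a b \<inter> LC c d"
    obtain x y z w where vv: "v = (x,y,z,w)" by (cases v) auto
    have e: "x = a*y" "z = b*w" "x = c*w" "y = d*z" using v unfolding vv LA_def LC_def by auto
    have h: "a*b*d*w = c*w" using e by (metis mult.assoc mult.commute)
    have "(a*b*d - c)*w = 0" by (simp only: left_diff_distrib h) simp
    then have "w = 0" using assms by simp
    then show "v \<in> {(0,0,0,0)}" using e vv by simp
  qed
  show "{(0,0,0,0)} \<subseteq> LA a b \<inter> LC c d" unfolding LA_def LC_def by auto
qed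

lemma BC_c: assumes "a*b \<noteq> c*d" "c \<noteq> 0" shows "disjoint_lines (LB a b) (LC c d)"
  unfolding disjoint_lines_def
proof
  show "LB a b \<inter> LC c d \<subseteq> {(0,0,0,0)}"
  proof
    fix v assume v: "v \<in> LB a b \<inter> LC c d"
    obtain x y z w where vv: "v = (x,y,z,w)" by (cases v) auto
    have e: "x = a*z" "y = b*w" "x = c*w" "y = d*z" using v unfolding vv LB_def LC_def by auto
    have e1: "a*z = c*w" and e2: "b*w = d*z" using e by simp_all
    have "a*b*z = b*(a*z)" by (simp only: ac_simps)
    also have "\<dots> = c*(b*w)" unfolding e1 by (simp only: ac_simps)
    also have "\<dots> = c*d*z" unfolding e2 by (simp only: ac_simps)
    finally have h: "a*b*z = c*d*z" .
    have "(a*b - c*d)*z = 0" by (simp only: left_diff_distrib h) simp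
    then have z: "z = 0" using assms by simp
    then have "w = 0" using e assms by simp
    then show "v \<in> {(0,0,0,0)}" using e vv z by simp
  qed
  show "{(0,0,0,0)} \<subseteq> LB a b \<inter> LC c d" unfolding LB_def LC_def by auto
qed

lemma disj_sym: "disjoint_lines L M \<Longrightarrow> disjoint_lines M L"
  unfolding disjoint_lines_def by blast


lemma LA_on: assumes "a^5 = 1" "b^5 = 1" shows "line_on_F5 (LA a b)"
  unfolding line_on_F5_def proj_line_def
proof (intro conjI exI ballI)
  show "cindep2 (a,1,0,0) (0,0,b,1)" unfolding cindep2_def lincomb_def by simp
  show "LA a b = cspan2 (a,1,0,0) (0,0,b,1)"
  proof (intro set_eqI iffI)
    fix v assume "v \<in> LA a b"
    then obtain y w where vv: "v = (a*y, y, b*w, w)" unfolding LA_def by auto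
    have "v = lincomb y (a,1,0,0) w (0,0,b,1)" unfolding vv lincomb_def by simp
    then show "v \<in> cspan2 (a,1,0,0) (0,0,b,1)" unfolding cspan2_def by blast
  next
    fix v assume "v \<in> cspan2 (a,1,0,0) (0,0,b,1)"
    then obtain s t where "v = lincomb s (a,1,0,0) t (0,0,b,1)" unfolding cspan2_def by blast
    then show "v \<in> LA a b" unfolding LA_def lincomb_def by simp
  qed
  fix v assume "v \<in> LA a b"
  then obtain y w where "v = (a*y, y, b*w, w)" unfolding LA_def by auto
  then show "fermat5 v = 0" unfolding fermat5_def using assms by (simp add: power_mult_distrib)
qed
lemma LB_on: assumes "a^5 = 1" "b^5 = 1" shows "line_on_F5 (LB a b)"
  unfolding line_on_F5_def proj_line_def
proof (intro conjI exI ballI)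
  show "cindep2 (a,0,1,0) (0,b,0,1)" unfolding cindep2_def lincomb_def by simp
  show "LB a b = cspan2 (a,0,1,0) (0,b,0,1)"
  proof (intro set_eqI iffI)
    fix v assume "v \<in> LB a b"
    then obtain z w where vv: "v = (a*z, b*w, z, w)" unfolding LB_def by auto
    have "v = lincomb z (a,0,1,0) w (0,b,0,1)" unfolding vv lincomb_def by simp
    then show "v \<in> cspan2 (a,0,1,0) (0,b,0,1)" unfolding cspan2_def by blast
  next
    fix v assume "v \<in> cspan2 (a,0,1,0) (0,b,0,1)"
    then obtain s t where "v = lincomb s (a,0,1,0) t (0,b,0,1)" unfolding cspan2_def by blast
    then show "v \<in> LB a b" unfolding LB_def lincomb_def by simp
  qed
  fix v assume "v \<in> LB a b"
  then obtain z w where "v = (a*z, b*w, z, w)" unfolding LB_def by auto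
  then show "fermat5 v = 0" unfolding fermat5_def using assms by (simp add: power_mult_distrib)
qed
lemma LC_on: assumes "a^5 = -1" "b^5 = -1" shows "line_on_F5 (LC a b)"
  unfolding line_on_F5_def proj_line_def
proof (intro conjI exI ballI)
  show "cindep2 (a,0,0,1) (0,b,1,0)" unfolding cindep2_def lincomb_def by simp
  show "LC a b = cspan2 (a,0,0,1) (0,b,1,0)"
  proof (intro set_eqI iffI)
    fix v assume "v \<in> LC a b"
    then obtain w z where vv: "v = (a*w, b*z, z, w)" unfolding LC_def by auto
    have "v = lincomb w (a,0,0,1) z (0,b,1,0)" unfolding vv lincomb_def by simp
    then show "v \<in> cspan2 (a,0,0,1) (0,b,1,0)" unfolding cspan2_def by blast
  next
    fix v assume "v \<in> cspan2 (a,0,0,1) (0,b,1,0)"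
    then obtain s t where "v = lincomb s (a,0,0,1) t (0,b,1,0)" unfolding cspan2_def by blast
    then show "v \<in> LC a b" unfolding LC_def lincomb_def by simp
  qed
  fix v assume "v \<in> LC a b"
  then obtain z w where "v = (a*w, b*z, z, w)" unfolding LC_def by auto
  then show "fermat5 v = 0" unfolding fermat5_def using assms by (simp add: power_mult_distrib)
qed

definition lin :: "nat \<times> nat \<times> nat \<Rightarrow> cvec4 set" where
  "lin t = (case t of (f,i,j) \<Rightarrow>
     if f = 0 then LA (zeta^i) (zeta^j) else if f = 1 then LB (zeta^i) (zeta^j) else LC (- (zeta^i)) (- (zeta^j)))"

definition idisj :: "nat \<times> nat \<times> nat \<Rightarrow> nat \<times> nat \<times> nat \<Rightarrow> bool" where
  "idisj t t' = (case t of (f,i,j) \<Rightarrow> case t' of (g,k,l) \<Rightarrow>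
     (if f = g then i mod 5 \<noteq> k mod 5 \<and> j mod 5 \<noteq> l mod 5
      else if f = 0 \<and> g = 1 then (i+l) mod 5 \<noteq> (j+k) mod 5
      else if f = 1 \<and> g = 0 then (k+j) mod 5 \<noteq> (l+i) mod 5
      else if f = 0 then (i+j+l) mod 5 \<noteq> k mod 5
      else if g = 0 then (k+l+j) mod 5 \<noteq> i mod 5
      else if f = 1 then (i+j) mod 5 \<noteq> (k+l) mod 5
      else (k+l) mod 5 \<noteq> (i+j) mod 5))"

lemma lin_on: "f \<le> 2 \<Longrightarrow> line_on_F5 (lin (f,i,j))"
proof -
  assume f: "f \<le> 2"
  have z: "(zeta^i)^5 = 1" "(zeta^j)^5 = 1"
    by (simp_all add: power_mult[symmetric] mult.commute[of i] mult.commute[of j]) (simp_all add: power_mult zeta5)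
  have zc: "((- (zeta^i)))^5 = -1" "((- (zeta^j)))^5 = -1" using z by (simp_all add: power_minus_odd)
  show ?thesis unfolding lin_def using LA_on[OF z] LB_on[OF z] LC_on[OF zc] by simp
qed

lemma le2: "(f::nat) \<le> 2 \<Longrightarrow> f = 0 \<or> f = 1 \<or> f = 2" by auto

lemma idisj_ok:
  assumes "fst t \<le> 2" "fst t' \<le> 2" "idisj t t'"
  shows "disjoint_lines (lin t) (lin t')"
proof -
  obtain f i j where t: "t = (f,i,j)" by (cases t) auto
  obtain g k l where t': "t' = (g,k,l)" by (cases t') auto
  have f: "f \<le> 2" "g \<le> 2" using assms t t' by auto
  have d: "idisj (f,i,j) (g,k,l)" using assms t t' by simp
  have pw: "zeta^a * zeta^b = zeta^(a+b)" for a b by (simp add: power_add)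
  consider "f = 0" "g = 0" | "f = 0" "g = 1" | "f = 0" "g = 2" | "f = 1" "g = 0" | "f = 1" "g = 1"
    | "f = 1" "g = 2" | "f = 2" "g = 0" | "f = 2" "g = 1" | "f = 2" "g = 2"
    using le2[OF f(1)] le2[OF f(2)] by blast
  then show ?thesis
  proof cases
    case 1 then show ?thesis using d unfolding t t' lin_def idisj_def by (simp add: AA_c zeta_ne)
  next
    case 2
    then have "(i+l) mod 5 \<noteq> (j+k) mod 5" using d unfolding idisj_def by simp
    then have "zeta^i * zeta^l \<noteq> zeta^j * zeta^k" unfolding pw by (rule zeta_ne)
    then show ?thesis using 2 unfolding t t' lin_def by (simp add: AB_c)
  next
    case 3
    then have "(i+j+l) mod 5 \<noteq> k mod 5" using d unfolding idisj_def by simp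
    then have "zeta^i * zeta^j * zeta^l \<noteq> zeta^k" unfolding pw by (rule zeta_ne)
    then have "zeta^i * zeta^j * ((- (zeta^l))) \<noteq> (- (zeta^k))" by simp
    then show ?thesis using 3 unfolding t t' lin_def by (simp add: AC_c)
  next
    case 4
    then have "(k+j) mod 5 \<noteq> (l+i) mod 5" using d unfolding idisj_def by simp
    then have "zeta^k * zeta^j \<noteq> zeta^l * zeta^i" unfolding pw by (rule zeta_ne)
    then show ?thesis using 4 unfolding t t' lin_def by (simp add: AB_c disj_sym)
  next
    case 5 then show ?thesis using d unfolding t t' lin_def idisj_def by (simp add: BB_c zeta_ne)
  next
    case 6
    then have "(i+j) mod 5 \<noteq> (k+l) mod 5" using d unfolding idisj_def by simp
    then have "zeta^(i+j) \<noteq> zeta^(k+l)" by (rule zeta_ne)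
    then have "zeta^i * zeta^j \<noteq> ((- (zeta^k))) * ((- (zeta^l)))" by (simp add: power_add)
    then show ?thesis using 6 zeta_nz unfolding t t' lin_def by (simp add: BC_c)
  next
    case 7
    then have "(k+l+j) mod 5 \<noteq> i mod 5" using d unfolding idisj_def by simp
    then have "zeta^k * zeta^l * zeta^j \<noteq> zeta^i" unfolding pw by (rule zeta_ne)
    then have "zeta^k * zeta^l * ((- (zeta^j))) \<noteq> (- (zeta^i))" by simp
    then show ?thesis using 7 unfolding t t' lin_def by (simp add: AC_c disj_sym)
  next
    case 8
    then have "(k+l) mod 5 \<noteq> (i+j) mod 5" using d unfolding idisj_def by simp
    then have "zeta^(k+l) \<noteq> zeta^(i+j)" by (rule zeta_ne)
    then have "zeta^k * zeta^l \<noteq> ((- (zeta^i))) * ((- (zeta^j)))" by (simp add: power_add)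
    then show ?thesis using 8 zeta_nz unfolding t t' lin_def by (simp add: BC_c disj_sym)
  next
    case 9 then show ?thesis using d unfolding t t' lin_def idisj_def by (simp add: CC_c zeta_ne)
  qed
qed

definition T13 :: "(nat \<times> nat \<times> nat) set" where
  "T13 = {(0,0,0),(0,1,1),(0,2,2),(0,3,4),(0,4,3),(1,0,2),(1,1,3),(1,2,0),(1,3,1),(2,1,0),(2,2,4),(2,3,2),(2,4,1)}"

lemma T13_ok_0: "\<forall>t'\<in>T13. (0,0,0) \<noteq> t' \<longrightarrow> idisj (0,0,0) t'"
  by (simp add: T13_def idisj_def)

lemma T13_ok_1: "\<forall>t'\<in>T13. (0,1,1) \<noteq> t' \<longrightarrow> idisj (0,1,1) t'"
  by (simp add: T13_def idisj_def)

lemma T13_ok_2: "\<forall>t'\<in>T13. (0,2,2) \<noteq> t' \<longrightarrow> idisj (0,2,2) t'"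
  by (simp add: T13_def idisj_def)

lemma T13_ok_3: "\<forall>t'\<in>T13. (0,3,4) \<noteq> t' \<longrightarrow> idisj (0,3,4) t'"
  by (simp add: T13_def idisj_def)

lemma T13_ok_4: "\<forall>t'\<in>T13. (0,4,3) \<noteq> t' \<longrightarrow> idisj (0,4,3) t'"
  by (simp add: T13_def idisj_def)

lemma T13_ok_5: "\<forall>t'\<in>T13. (1,0,2) \<noteq> t' \<longrightarrow> idisj (1,0,2) t'"
  by (simp add: T13_def idisj_def)

lemma T13_ok_6: "\<forall>t'\<in>T13. (1,1,3) \<noteq> t' \<longrightarrow> idisj (1,1,3) t'"
  by (simp add: T13_def idisj_def)

lemma T13_ok_7: "\<forall>t'\<in>T13. (1,2,0) \<noteq> t' \<longrightarrow> idisj (1,2,0) t'"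
  by (simp add: T13_def idisj_def)

lemma T13_ok_8: "\<forall>t'\<in>T13. (1,3,1) \<noteq> t' \<longrightarrow> idisj (1,3,1) t'"
  by (simp add: T13_def idisj_def)

lemma T13_ok_9: "\<forall>t'\<in>T13. (2,1,0) \<noteq> t' \<longrightarrow> idisj (2,1,0) t'"
  by (simp add: T13_def idisj_def)

lemma T13_ok_10: "\<forall>t'\<in>T13. (2,2,4) \<noteq> t' \<longrightarrow> idisj (2,2,4) t'"
  by (simp add: T13_def idisj_def)

lemma T13_ok_11: "\<forall>t'\<in>T13. (2,3,2) \<noteq> t' \<longrightarrow> idisj (2,3,2) t'"
  by (simp add: T13_def idisj_def)

lemma T13_ok_12: "\<forall>t'\<in>T13. (2,4,1) \<noteq> t' \<longrightarrow> idisj (2,4,1) t'"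
  by (simp add: T13_def idisj_def)

lemma T13_ok: "\<forall>t\<in>T13. \<forall>t'\<in>T13. t \<noteq> t' \<longrightarrow> idisj t t'"
proof
  fix t assume "t \<in> T13"
  then have "t = (0,0,0) \<or> t = (0,1,1) \<or> t = (0,2,2) \<or> t = (0,3,4) \<or> t = (0,4,3) \<or> t = (1,0,2) \<or> t = (1,1,3) \<or> t = (1,2,0) \<or> t = (1,3,1) \<or> t = (2,1,0) \<or> t = (2,2,4) \<or> t = (2,3,2) \<or> t = (2,4,1)" unfolding T13_def by simp
  then show "\<forall>t'\<in>T13. t \<noteq> t' \<longrightarrow> idisj t t'"
    by (elim disjE) (hypsubst, rule T13_ok_0 T13_ok_1 T13_ok_2 T13_ok_3 T13_ok_4 T13_ok_5 T13_ok_6 T13_ok_7 T13_ok_8 T13_ok_9 T13_ok_10 T13_ok_11 T13_ok_12)+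
qed

lemma T13_fst: "t \<in> T13 \<Longrightarrow> fst t \<le> 2" unfolding T13_def by auto
lemma T13_card: "card T13 = 13" unfolding T13_def by simp

lemma lin_nz: "\<exists>v\<in>lin t. v \<noteq> (0,0,0,0)"
proof -
  obtain f i j where t: "t = (f,i,j)" by (cases t) auto
  show ?thesis
  proof (cases "f = 0")
    case True
    then have l: "lin t = LA (zeta^i) (zeta^j)" unfolding t lin_def by simp
    have "(zeta^i,1,0,0) \<in> LA (zeta^i) (zeta^j)" unfolding LA_def by simp
    moreover have "(zeta^i,1,0,0) \<noteq> (0::complex,0::complex,0::complex,0::complex)" by simp
    ultimately show ?thesis unfolding l by blast
  next
    case f0: False
    show ?thesis
    proof (cases "f = 1")
      case True
      then have l: "lin t = LB (zeta^i) (zeta^j)" unfolding t lin_def by simp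
      have "(zeta^i,0,1,0) \<in> LB (zeta^i) (zeta^j)" unfolding LB_def by simp
      moreover have "(zeta^i,0,1,0) \<noteq> (0::complex,0::complex,0::complex,0::complex)" by simp
      ultimately show ?thesis unfolding l by blast
    next
      case False
      then have l: "lin t = LC (- (zeta^i)) (- (zeta^j))" using f0 unfolding t lin_def by simp
      have "(- (zeta^i),0,0,1) \<in> LC (- (zeta^i)) (- (zeta^j))" unfolding LC_def by simp
      moreover have "(- (zeta^i),0,0,1) \<noteq> (0::complex,0::complex,0::complex,0::complex)" by simp
      ultimately show ?thesis unfolding l by blast
    qed
  qed
qed

theorem lower:
  "\<exists>S. finite S \<and> card S = 13 \<and> (\<forall>L\<in>S. line_on_F5 L) \<and>
            (\<forall>L\<in>S. \<forall>M\<in>S. L \<noteq> M \<longrightarrow> disjoint_lines L M)"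
proof (intro exI conjI)
  have dj: "disjoint_lines (lin t) (lin t')" if "t \<in> T13" "t' \<in> T13" "t \<noteq> t'" for t t'
    using idisj_ok T13_fst T13_ok that by blast
  have inj: "inj_on lin T13"
  proof (rule inj_onI)
    fix t t' assume tt: "t \<in> T13" "t' \<in> T13" "lin t = lin t'"
    show "t = t'"
    proof (rule ccontr)
      assume "t \<noteq> t'"
      then have "disjoint_lines (lin t) (lin t')" using dj tt by blast
      then have "lin t = {(0,0,0,0)}" using tt(3) unfolding disjoint_lines_def by simp
      then show False using lin_nz[of t] by auto
    qed
  qed
  have fin: "finite T13" unfolding T13_def by simp
  show "finite (lin ` T13)" using fin by simp
  show "card (lin ` T13) = 13" using card_image[OF inj] T13_card by simp
  show "\<forall>L\<in>lin ` T13. line_on_F5 L"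
  proof
    fix L assume "L \<in> lin ` T13"
    then obtain t where t: "t \<in> T13" "L = lin t" by blast
    obtain f i j where tt: "t = (f,i,j)" by (cases t) auto
    have "f \<le> 2" using T13_fst[OF t(1)] tt by simp
    then show "line_on_F5 L" using lin_on t tt by simp
  qed
  show "\<forall>L\<in>lin ` T13. \<forall>M\<in>lin ` T13. L \<noteq> M \<longrightarrow> disjoint_lines L M"
    using dj by blast
qed

theorem theorem3p6:
  shows "(\<exists>S. finite S \<and> card S = 13 \<and> (\<forall>L\<in>S. line_on_F5 L) \<and>
            (\<forall>L\<in>S. \<forall>M\<in>S. L \<noteq> M \<longrightarrow> disjoint_lines L M))
       \<and> (\<forall>S. (\<forall>L\<in>S. line_on_F5 L) \<and>
               (\<forall>L\<in>S. \<forall>M\<in>S. L \<noteq> M \<longrightarrow> disjoint_lines L M)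
               \<longrightarrow> finite S \<and> card S \<le> 13)"
  proof (rule conjI)
  show "\<exists>S. finite S \<and> card S = 13 \<and> (\<forall>L\<in>S. line_on_F5 L) \<and>
            (\<forall>L\<in>S. \<forall>M\<in>S. L \<noteq> M \<longrightarrow> disjoint_lines L M)" by (rule lower)
  show "\<forall>S. (\<forall>L\<in>S. line_on_F5 L) \<and>
               (\<forall>L\<in>S. \<forall>M\<in>S. L \<noteq> M \<longrightarrow> disjoint_lines L M)
               \<longrightarrow> finite S \<and> card S \<le> 13"
  proof (intro allI impI)
    fix S :: "cvec4 set set"
    assume h: "(\<forall>L\<in>S. line_on_F5 L) \<and> (\<forall>L\<in>S. \<forall>M\<in>S. L \<noteq> M \<longrightarrow> disjoint_lines L M)"
    show "finite S \<and> card S \<le> 13" using h by (elim conjE) (rule upper)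
  qed
qed

end
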